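(* Let $K$ be a complex with the maximum number of facets among all complexes in $\mathcal{K}(n,r,\beta)$. Then $K$ contains every $r$-element subset of $V(K)$ as an $(r-1)$-face, and $K$ is $(r-1)$-path connected.
   Context: A (finite abstract) simplicial complex $K$ on a finite vertex set $V(K)$ is a family of subsets of $V(K)$ closed under taking subsets and containing every singleton; it is on $n$ vertices if $|V(K)|=n$. An $i$-face is a member of cardinality $i+1$; facets are inclusion-maximal faces; $K$ is pure if all facets have the same dimension. Two distinct $i$-faces are up-neighbors if their union is an $(i+1)$-face. $K$ is $i$-path connected if for any two $i$-faces $F,G$ there is a sequence $F=F_1,\dots,F_m=G$ of $i$-faces in which consecutive terms are up-neighbors. $\beta_r(K)=\dim_{\mathbb R}H_r(K;\mathbb R)$. $\mathcal{K}(n,r,\beta)$ denotes the set of pure $r$-dimensional simplicial complexes on $n$ vertices with $\beta_r=\beta$ ($r\ge 1$). *)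

theory Defs
  imports Complex_Main "HOL-Library.Function_Algebras"
begin

text \<open>Vertices are linearly ordered, which
  fixes the orientation used for simplicial chains.\<close>

definition simplicial_complex :: "'a set set \<Rightarrow> bool" where
  "simplicial_complex K \<longleftrightarrow> K \<noteq> {} \<and> finite (\<Union>K) \<and> (\<forall>F\<in>K. \<forall>G. G \<subseteq> F \<longrightarrow> G \<in> K)"

definition vertices :: "'a set set \<Rightarrow> 'a set" where
  "vertices K = \<Union>K"

definition faces :: "'a set set \<Rightarrow> nat \<Rightarrow> 'a set set" where
  "faces K i = {F \<in> K. card F = i + 1}"

definition facets :: "'a set set \<Rightarrow> 'a set set" where
  "facets K = {F \<in> K. \<forall>G\<in>K. F \<subseteq> G \<longrightarrow> G = F}"

definition pure_dim :: "'a set set \<Rightarrow> nat \<Rightarrow> bool" where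
  "pure_dim K r \<longleftrightarrow> (\<forall>F\<in>facets K. card F = r + 1)"

text \<open>Real simplicial chains: i-chains are real-valued functions supported on i-faces
  (each i-face identified with its increasingly ordered oriented simplex).\<close>
definition chains :: "'a set set \<Rightarrow> nat \<Rightarrow> ('a set \<Rightarrow> real) set" where
  "chains K i = {c. \<forall>x. c x \<noteq> 0 \<longrightarrow> x \<in> faces K i}"

definition boundary :: "'a::linorder set set \<Rightarrow> nat \<Rightarrow> ('a set \<Rightarrow> real) \<Rightarrow> ('a set \<Rightarrow> real)" where
  "boundary K i c = (\<lambda>\<sigma>. if 0 < i \<and> \<sigma> \<in> faces K (i - 1) then
      (\<Sum>v\<in>vertices K - \<sigma>. if insert v \<sigma> \<in> K
          then (-1) ^ card {u\<in>\<sigma>. u < v} * c (insert v \<sigma>) else 0)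
     else 0)"

definition rdim :: "('a set \<Rightarrow> real) set \<Rightarrow> nat" where
  "rdim S = vector_space.dim (\<lambda>(a::real) f x. a * f x) S"

definition cycles :: "'a::linorder set set \<Rightarrow> nat \<Rightarrow> ('a set \<Rightarrow> real) set" where
  "cycles K i = {c \<in> chains K i. boundary K i c = 0}"

definition bdries :: "'a::linorder set set \<Rightarrow> nat \<Rightarrow> ('a set \<Rightarrow> real) set" where
  "bdries K i = boundary K (Suc i) ` chains K (Suc i)"

definition betti :: "'a::linorder set set \<Rightarrow> nat \<Rightarrow> nat" where
  "betti K r = rdim (cycles K r) - rdim (bdries K r)"

definition cplx_class :: "nat \<Rightarrow> nat \<Rightarrow> nat \<Rightarrow> 'a::linorder set set set" where
  "cplx_class n r \<beta> = {K. simplicial_complex K \<and> card (vertices K) = n \<and>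
      (\<exists>F\<in>K. card F = r + 1) \<and> pure_dim K r \<and> betti K r = \<beta>}"

definition up_neighbors :: "'a set set \<Rightarrow> nat \<Rightarrow> 'a set \<Rightarrow> 'a set \<Rightarrow> bool" where
  "up_neighbors K i F G \<longleftrightarrow> F \<in> faces K i \<and> G \<in> faces K i \<and> F \<noteq> G \<and>
      F \<union> G \<in> faces K (Suc i)"

definition path_connected_dim :: "'a set set \<Rightarrow> nat \<Rightarrow> bool" where
  "path_connected_dim K i \<longleftrightarrow> (\<forall>F\<in>faces K i. \<forall>G\<in>faces K i.
      \<exists>xs. xs \<noteq> [] \<and> hd xs = F \<and> last xs = G \<and> set xs \<subseteq> faces K i \<and>
        (\<forall>j. Suc j < length xs \<longrightarrow> up_neighbors K i (xs ! j) (xs ! Suc j)))"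

end

theory Submission
  imports Defs
begin

lemma vs_fun: "vector_space (\<lambda>(a::real) (f::'b \<Rightarrow> real) x. a * f x)"
  by unfold_locales (auto simp: fun_eq_iff algebra_simps)

interpretation fs: vector_space "\<lambda>(a::real) (f::'b \<Rightarrow> real) x. a * f x"
  by (rule vs_fun)

lemma sum_fun_apply: "(\<Sum>y\<in>A. f y) x = (\<Sum>y\<in>A. f y x)"
  by (induction A rule: infinite_finite_induct) auto

lemma rdim_eq: "rdim S = fs.dim S"
  unfolding rdim_def ..

lemma rank_nullity_le:
  fixes f :: "('b \<Rightarrow> real) \<Rightarrow> ('c \<Rightarrow> real)"
  assumes lin: "Vector_Spaces.linear (\<lambda>(a::real) (f::'b \<Rightarrow> real) x. a * f x) (\<lambda>(a::real) (f::'c \<Rightarrow> real) x. a * f x) f"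
    and S: "fs.subspace S" and F: "finite F" "S \<subseteq> fs.span F"
  shows "fs.dim S \<le> fs.dim (S \<inter> {x. f x = 0}) + fs.dim (f ` S)"
proof -
  interpret L: Vector_Spaces.linear "\<lambda>(a::real) (f::'b \<Rightarrow> real) x. a * f x" "\<lambda>(a::real) (f::'c \<Rightarrow> real) x. a * f x" f
    by fact
  obtain Bz where Bz: "Bz \<subseteq> S \<inter> {x. f x = 0}" "fs.independent Bz" "S \<inter> {x. f x = 0} \<subseteq> fs.span Bz"
      "card Bz = fs.dim (S \<inter> {x. f x = 0})"
    by (rule fs.basis_exists)
  obtain Bw where Bw: "Bw \<subseteq> f ` S" "fs.independent Bw" "f ` S \<subseteq> fs.span Bw" "card Bw = fs.dim (f ` S)"
    by (rule fs.basis_exists)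
  have finBz: "finite Bz" using fs.independent_span_bound[OF F(1) Bz(2)] Bz(1) F(2) by blast
  have "f ` S \<subseteq> f ` fs.span F" using F(2) by blast
  also have "\<dots> = fs.span (f ` F)" by (simp add: L.span_image)
  finally have "Bw \<subseteq> fs.span (f ` F)" using Bw(1) by blast
  then have finBw: "finite Bw" using fs.independent_span_bound[OF _ Bw(2)] F(1) by blast
  have ex: "\<forall>w\<in>Bw. \<exists>x. x \<in> S \<and> f x = w" using Bw(1) by blast
  obtain g where g: "\<And>w. w \<in> Bw \<Longrightarrow> g w \<in> S \<and> f (g w) = w"
    using bchoice[OF ex] by blast
  have "f ` g ` Bw = (\<lambda>w. w) ` Bw" unfolding image_image by (rule image_cong) (simp_all add: g)
  then have fg: "f ` g ` Bw = Bw" by simp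
  have gS: "fs.span (g ` Bw) \<subseteq> S" using g S by (intro fs.span_minimal) auto
  have "S \<subseteq> fs.span (Bz \<union> g ` Bw)"
  proof
    fix x assume x: "x \<in> S"
    then have "f x \<in> fs.span Bw" using Bw(3) by blast
    also have "fs.span Bw = f ` fs.span (g ` Bw)" using L.span_image[of "g ` Bw"] unfolding fg .
    finally have "f x \<in> f ` fs.span (g ` Bw)" .
    then obtain y where y2: "f x = f y" and y1: "y \<in> fs.span (g ` Bw)" by (rule imageE)
    have yS: "y \<in> S" using gS y1 by (rule subsetD)
    have xyS: "x - y \<in> S" using fs.subspace_diff[OF S x yS] .
    have xy0: "f (x - y) = 0" using y2 L.diff by simp
    have "x - y \<in> fs.span Bz" using xyS xy0 by (intro subsetD[OF Bz(3)] IntI CollectI)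
    then have "x - y \<in> fs.span (Bz \<union> g ` Bw)" by (rule subsetD[OF fs.span_mono[OF Un_upper1]])
    moreover have "y \<in> fs.span (Bz \<union> g ` Bw)" using y1 by (rule subsetD[OF fs.span_mono[OF Un_upper2]])
    ultimately have "(x - y) + y \<in> fs.span (Bz \<union> g ` Bw)" by (rule fs.span_add)
    then show "x \<in> fs.span (Bz \<union> g ` Bw)" by simp
  qed
  then have "fs.dim S \<le> card (Bz \<union> g ` Bw)" using finBz finBw by (intro fs.dim_le_card) simp_all
  also have "\<dots> \<le> card Bz + card (g ` Bw)" by (rule card_Un_le)
  also have "\<dots> \<le> card Bz + card Bw" using card_image_le[OF finBw, of g] by simp
  finally show ?thesis using Bz(4) Bw(4) by simp
qed

definition ind :: "'a set \<Rightarrow> 'a set \<Rightarrow> real" where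
  "ind S = (\<lambda>x. if x = S then 1 else 0)"

definition sg :: "'a::linorder set \<Rightarrow> 'a \<Rightarrow> real" where
  "sg \<rho> v = (-1) ^ card {u\<in>\<rho>. u < v}"

definition eb :: "'a::linorder set \<Rightarrow> 'a set \<Rightarrow> real" where
  "eb \<rho> = (\<lambda>\<sigma>. \<Sum>v\<in>\<rho>. if \<sigma> = \<rho> - {v} then sg \<rho> v else 0)"

lemma sg_nz: "sg \<rho> v \<noteq> 0"
  unfolding sg_def by simp

lemma sg_sq: "sg \<rho> v * sg \<rho> v = 1"
  unfolding sg_def by (simp add: power_mult_distrib[symmetric])

lemma eb_at:
  assumes "finite \<rho>" "v \<in> \<rho>"
  shows "eb \<rho> (\<rho> - {v}) = sg \<rho> v"
proof -
  have "eb \<rho> (\<rho> - {v}) = (\<Sum>w\<in>\<rho>. if w = v then sg \<rho> w else 0)"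
    unfolding eb_def using assms(2) by (intro sum.cong refl) auto
  also have "\<dots> = sg \<rho> v" using assms by simp
  finally show ?thesis .
qed

lemma eb_zero: "(\<And>v. v \<in> \<rho> \<Longrightarrow> \<sigma> \<noteq> \<rho> - {v}) \<Longrightarrow> eb \<rho> \<sigma> = 0"
  unfolding eb_def by (intro sum.neutral) auto

lemma eb_nzD: "eb \<rho> \<sigma> \<noteq> 0 \<Longrightarrow> \<exists>v\<in>\<rho>. \<sigma> = \<rho> - {v}"
  using eb_zero by blast

lemma eb_nz:
  assumes "finite \<rho>" "\<sigma> \<subseteq> \<rho>" "card \<rho> = Suc (card \<sigma>)"
  shows "eb \<rho> \<sigma> \<noteq> 0"
proof -
  have "\<sigma> \<noteq> \<rho>" using assms by auto
  then obtain v where v: "v \<in> \<rho>" "v \<notin> \<sigma>" using assms(2) by blast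
  have "\<sigma> \<subseteq> \<rho> - {v}" using v assms(2) by blast
  moreover have "card \<sigma> = card (\<rho> - {v})" using assms v by simp
  ultimately have "\<sigma> = \<rho> - {v}" using assms(1) by (intro card_subset_eq) auto
  then show ?thesis using eb_at[OF assms(1) v(1)] sg_nz by simp
qed

lemma sc_finite:
  assumes "simplicial_complex K"
  shows "finite (vertices K)" "finite K" "F \<in> K \<Longrightarrow> finite F" "F \<in> K \<Longrightarrow> F \<subseteq> vertices K"
    "F \<in> K \<Longrightarrow> G \<subseteq> F \<Longrightarrow> G \<in> K"
proof -
  show fv: "finite (vertices K)" using assms unfolding simplicial_complex_def vertices_def by blast
  have "K \<subseteq> Pow (vertices K)" unfolding vertices_def by blast
  then show "finite K" using fv by (metis finite_Pow_iff finite_subset)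
  show "F \<in> K \<Longrightarrow> F \<subseteq> vertices K" unfolding vertices_def by blast
  then show "F \<in> K \<Longrightarrow> finite F" using fv finite_subset by blast
  show "F \<in> K \<Longrightarrow> G \<subseteq> F \<Longrightarrow> G \<in> K" using assms unfolding simplicial_complex_def by blast
qed

lemma faces_finite: assumes "simplicial_complex K" shows "finite (faces K i)"
  unfolding faces_def by (rule finite_subset[OF _ sc_finite(2)[OF assms]]) auto

lemma bd_formula:
  fixes K :: "'a::linorder set set"
  assumes sc: "simplicial_complex K" and r: "0 < r" and c: "c \<in> chains K r"
  shows "boundary K r c \<sigma> = (\<Sum>\<tau>\<in>faces K r. c \<tau> * eb \<tau> \<sigma>)"
proof (cases "\<sigma> \<in> faces K (r - 1)")
  case True
  define V where "V = vertices K"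
  define A where "A = {v \<in> V - \<sigma>. insert v \<sigma> \<in> K}"
  have fV: "finite V" using sc_finite(1)[OF sc] V_def by simp
  have sK: "\<sigma> \<in> K" and cs: "card \<sigma> = r" using True r unfolding faces_def by auto
  have fs: "finite \<sigma>" using sc_finite(3)[OF sc sK] .
  have "boundary K r c \<sigma> = (\<Sum>v\<in>V - \<sigma>. if insert v \<sigma> \<in> K
          then (-1) ^ card {u\<in>\<sigma>. u < v} * c (insert v \<sigma>) else 0)"
    unfolding boundary_def V_def using True r by simp
  also have "\<dots> = (\<Sum>v\<in>A. (-1) ^ card {u\<in>\<sigma>. u < v} * c (insert v \<sigma>))"
    unfolding A_def by (rule sum.inter_filter[symmetric]) (use fV in simp)
  also have "\<dots> = (\<Sum>v\<in>A. c (insert v \<sigma>) * eb (insert v \<sigma>) \<sigma>)"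
  proof (intro sum.cong refl)
    fix v assume v: "v \<in> A"
    then have vs: "v \<notin> \<sigma>" unfolding A_def by blast
    have "eb (insert v \<sigma>) (insert v \<sigma> - {v}) = sg (insert v \<sigma>) v"
      using fs by (intro eb_at) auto
    moreover have "insert v \<sigma> - {v} = \<sigma>" using vs by blast
    moreover have "{u\<in>insert v \<sigma>. u < v} = {u\<in>\<sigma>. u < v}" by auto
    ultimately have "eb (insert v \<sigma>) \<sigma> = (-1) ^ card {u\<in>\<sigma>. u < v}" unfolding sg_def by simp
    then show "(-1) ^ card {u\<in>\<sigma>. u < v} * c (insert v \<sigma>) = c (insert v \<sigma>) * eb (insert v \<sigma>) \<sigma>"
      by simp
  qed
  also have "\<dots> = (\<Sum>\<tau>\<in>(\<lambda>v. insert v \<sigma>) ` A. c \<tau> * eb \<tau> \<sigma>)"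
    by (rule sum.reindex[symmetric, unfolded comp_def]) (auto simp: inj_on_def A_def)
  also have "\<dots> = (\<Sum>\<tau>\<in>faces K r. c \<tau> * eb \<tau> \<sigma>)"
  proof (rule sum.mono_neutral_left)
    show "finite (faces K r)" by (rule faces_finite[OF sc])
    show "(\<lambda>v. insert v \<sigma>) ` A \<subseteq> faces K r"
    proof
      fix \<tau> assume "\<tau> \<in> (\<lambda>v. insert v \<sigma>) ` A"
      then obtain v where v: "v \<in> A" "\<tau> = insert v \<sigma>" by blast
      then have "v \<notin> \<sigma>" "insert v \<sigma> \<in> K" unfolding A_def by auto
      then show "\<tau> \<in> faces K r" using v(2) cs fs r unfolding faces_def by simp
    qed
    show "\<forall>\<tau>\<in>faces K r - (\<lambda>v. insert v \<sigma>) ` A. c \<tau> * eb \<tau> \<sigma> = 0"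
    proof
      fix \<tau> assume t: "\<tau> \<in> faces K r - (\<lambda>v. insert v \<sigma>) ` A"
      show "c \<tau> * eb \<tau> \<sigma> = 0"
      proof (rule ccontr)
        assume "c \<tau> * eb \<tau> \<sigma> \<noteq> 0"
        then have "eb \<tau> \<sigma> \<noteq> 0" by auto
        then obtain v where v: "v \<in> \<tau>" "\<sigma> = \<tau> - {v}" using eb_nzD by blast
        have tK: "\<tau> \<in> K" using t unfolding faces_def by blast
        have "v \<in> V" using sc_finite(4)[OF sc tK] v(1) V_def by blast
        moreover have "v \<notin> \<sigma>" using v by blast
        moreover have "insert v \<sigma> = \<tau>" using v by blast
        ultimately have "\<tau> \<in> (\<lambda>v. insert v \<sigma>) ` A" using tK unfolding A_def by blast
        then show False using t by blast
      qed
    qed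
  qed
  finally show ?thesis .
next
  case False
  have "boundary K r c \<sigma> = 0" unfolding boundary_def using False by simp
  moreover have "(\<Sum>\<tau>\<in>faces K r. c \<tau> * eb \<tau> \<sigma>) = 0"
  proof (intro sum.neutral ballI)
    fix \<tau> assume t: "\<tau> \<in> faces K r"
    show "c \<tau> * eb \<tau> \<sigma> = 0"
    proof (rule ccontr)
      assume "c \<tau> * eb \<tau> \<sigma> \<noteq> 0"
      then have "eb \<tau> \<sigma> \<noteq> 0" by auto
      then obtain v where v: "v \<in> \<tau>" "\<sigma> = \<tau> - {v}" using eb_nzD by blast
      have tK: "\<tau> \<in> K" and ct: "card \<tau> = r + 1" using t unfolding faces_def by auto
      have "\<sigma> \<in> K" using sc_finite(5)[OF sc tK] v by blast
      moreover have "card \<sigma> = r" using v ct sc_finite(3)[OF sc tK] by simp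
      ultimately have "\<sigma> \<in> faces K (r - 1)" using r unfolding faces_def by simp
      then show False using False by blast
    qed
  qed
  ultimately show ?thesis by simp
qed

lemma ind_chain: "\<tau> \<in> faces K r \<Longrightarrow> ind \<tau> \<in> chains K r"
  unfolding chains_def ind_def by auto

lemma bd_ind:
  fixes K :: "'a::linorder set set"
  assumes sc: "simplicial_complex K" and r: "0 < r" and t: "\<tau> \<in> faces K r"
  shows "boundary K r (ind \<tau>) = eb \<tau>"
proof
  fix \<sigma>
  have "boundary K r (ind \<tau>) \<sigma> = (\<Sum>\<tau>'\<in>faces K r. ind \<tau> \<tau>' * eb \<tau>' \<sigma>)"
    by (rule bd_formula[OF sc r ind_chain[OF t]])
  also have "\<dots> = (\<Sum>\<tau>'\<in>faces K r. if \<tau>' = \<tau> then eb \<tau>' \<sigma> else 0)"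
    unfolding ind_def by (intro sum.cong refl) auto
  also have "\<dots> = eb \<tau> \<sigma>" using t faces_finite[OF sc] by simp
  finally show "boundary K r (ind \<tau>) \<sigma> = eb \<tau> \<sigma>" .
qed

lemma bd_span:
  fixes K :: "'a::linorder set set"
  assumes sc: "simplicial_complex K" and r: "0 < r" and c: "c \<in> chains K r"
  shows "boundary K r c \<in> fs.span (eb ` faces K r)"
proof -
  have "boundary K r c = (\<Sum>\<tau>\<in>faces K r. (\<lambda>\<sigma>. c \<tau> * eb \<tau> \<sigma>))"
    by (rule ext) (simp add: sum_fun_apply bd_formula[OF sc r c])
  also have "\<dots> \<in> fs.span (eb ` faces K r)"
    by (intro fs.span_sum fs.span_scale[of "eb _" "eb ` faces K r", simplified] fs.span_base imageI)
  finally show ?thesis .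
qed

lemma lin_bd: "Vector_Spaces.linear (\<lambda>(a::real) (f::'a set \<Rightarrow> real) x. a * f x)
   (\<lambda>(a::real) (f::'a set \<Rightarrow> real) x. a * f x) (boundary (K::'a::linorder set set) i)"
proof -
  have add: "boundary K i (x + y) = boundary K i x + boundary K i y" for x y
    unfolding boundary_def
    by (rule ext) (auto simp: sum.distrib[symmetric] algebra_simps intro!: sum.cong)
  have sc: "boundary K i (\<lambda>z. a * x z) = (\<lambda>z. a * boundary K i x z)" for a x
    unfolding boundary_def
    by (rule ext) (auto simp: sum_distrib_left algebra_simps intro!: sum.cong)
  show ?thesis unfolding Vector_Spaces.linear_iff using add sc vs_fun by blast
qed

lemma chains_subspace: "fs.subspace (chains K i)"
  unfolding fs.subspace_def chains_def by auto (metis add.right_neutral)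

lemma pair_cancel:
  fixes f :: "'a \<times> 'a \<Rightarrow> real"
  assumes fin: "finite A"
    and anti: "\<And>v w. v \<in> A \<Longrightarrow> w \<in> A \<Longrightarrow> v \<noteq> w \<Longrightarrow> f (w, v) = - f (v, w)"
  shows "(\<Sum>p\<in>{(v, w). v \<in> A \<and> w \<in> A \<and> v \<noteq> w}. f p) = 0"
proof -
  define P where "P = {(v, w). v \<in> A \<and> w \<in> A \<and> v \<noteq> w}"
  have fP: "finite P" unfolding P_def by (rule finite_subset[of _ "A \<times> A"]) (auto simp: fin)
  have sw: "prod.swap ` P = P" unfolding P_def by auto
  have "sum f P = sum f (prod.swap ` P)" using sw by simp
  also have "\<dots> = sum (f \<circ> prod.swap) P" by (rule sum.reindex) (rule inj_swap)
  also have "\<dots> = sum (\<lambda>p. - f p) P"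
  proof (intro sum.cong refl)
    fix p assume "p \<in> P"
    then obtain v w where p: "p = (v, w)" "v \<in> A" "w \<in> A" "v \<noteq> w" unfolding P_def by blast
    show "(f \<circ> prod.swap) p = - f p" unfolding p(1) using anti[OF p(2-4)] by simp
  qed
  also have "\<dots> = - sum f P" by (simp add: sum_negf)
  finally have "sum f P = 0" by simp
  then show ?thesis unfolding P_def .
qed

lemma neg1_pow_pred: "0 < k \<Longrightarrow> (-1::real) ^ (k - 1) = - ((-1) ^ k)"
  by (cases k) auto

lemma sg_remove_less:
  assumes "finite \<tau>" "v \<in> \<tau>" "v < w"
  shows "sg (\<tau> - {v}) w = - sg \<tau> w"
proof -
  have e: "{u \<in> \<tau> - {v}. u < w} = {u \<in> \<tau>. u < w} - {v}" by auto
  have v: "v \<in> {u \<in> \<tau>. u < w}" using assms by auto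
  have f: "finite {u \<in> \<tau>. u < w}" using assms by simp
  have c: "card ({u \<in> \<tau>. u < w} - {v}) = card {u \<in> \<tau>. u < w} - 1" using v f by simp
  have "0 < card {u \<in> \<tau>. u < w}" using v f card_gt_0_iff by blast
  then show ?thesis unfolding sg_def e c by (rule neg1_pow_pred)
qed

lemma sg_remove_greater:
  assumes "w < v"
  shows "sg (\<tau> - {v}) w = sg \<tau> w"
proof -
  have "{u \<in> \<tau> - {v}. u < w} = {u \<in> \<tau>. u < w}" using assms by auto
  then show ?thesis unfolding sg_def by simp
qed

lemma sg_insert_less:
  assumes "finite \<tau>" "v0 \<notin> \<tau>" "v0 < w"
  shows "sg (insert v0 \<tau>) w = - sg \<tau> w"
proof -
  have "{u \<in> insert v0 \<tau>. u < w} = insert v0 {u \<in> \<tau>. u < w}" using assms by auto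
  moreover have "card (insert v0 {u \<in> \<tau>. u < w}) = Suc (card {u \<in> \<tau>. u < w})"
    using assms by simp
  ultimately show ?thesis unfolding sg_def by simp
qed

lemma sg_insert_min:
  assumes "\<forall>u\<in>\<tau>. v0 < u"
  shows "sg (insert v0 \<tau>) v0 = 1"
proof -
  have e: "{u \<in> insert v0 \<tau>. u < v0} = {}" using assms by auto
  show ?thesis unfolding sg_def by (simp only: e card.empty power_0)
qed

lemma sg_anti:
  assumes "finite \<tau>" "v \<in> \<tau>" "w \<in> \<tau>" "v \<noteq> w"
  shows "sg \<tau> w * sg (\<tau> - {w}) v = - (sg \<tau> v * sg (\<tau> - {v}) w)"
proof (cases "v < w")
  case True
  then show ?thesis using sg_remove_less[OF assms(1,2) True] sg_remove_greater[of v w \<tau>] by simp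
next
  case False
  then have "w < v" using assms(4) by auto
  then show ?thesis using sg_remove_less[OF assms(1,3) \<open>w < v\<close>] sg_remove_greater[of w v \<tau>] by simp
qed

lemma eb_cone_eval:
  assumes fin: "finite \<tau>" and v0: "v0 \<notin> \<tau>" and mn: "\<forall>u\<in>\<tau>. v0 < u" and v: "v \<in> \<tau>"
  shows "eb (insert v0 (\<tau> - {v})) \<sigma> = (if \<sigma> = \<tau> - {v} then 1 else 0)
      + (\<Sum>w\<in>\<tau> - {v}. if \<sigma> = insert v0 (\<tau> - {v} - {w}) then - sg (\<tau> - {v}) w else 0)"
proof -
  let ?\<rho> = "insert v0 (\<tau> - {v})"
  have f: "finite (\<tau> - {v})" using fin by simp
  have n: "v0 \<notin> \<tau> - {v}" using v0 by simp
  have "eb ?\<rho> \<sigma> = (if \<sigma> = ?\<rho> - {v0} then sg ?\<rho> v0 else 0)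
      + (\<Sum>w\<in>\<tau> - {v}. if \<sigma> = ?\<rho> - {w} then sg ?\<rho> w else 0)"
    unfolding eb_def using f n by (simp add: sum.insert)
  also have "?\<rho> - {v0} = \<tau> - {v}" using n by blast
  also have "sg ?\<rho> v0 = 1" using mn by (intro sg_insert_min) auto
  also have "(\<Sum>w\<in>\<tau> - {v}. if \<sigma> = ?\<rho> - {w} then sg ?\<rho> w else 0)
      = (\<Sum>w\<in>\<tau> - {v}. if \<sigma> = insert v0 (\<tau> - {v} - {w}) then - sg (\<tau> - {v}) w else 0)"
  proof (intro sum.cong refl)
    fix w assume w: "w \<in> \<tau> - {v}"
    then have "w \<noteq> v0" using v0 by auto
    then have "?\<rho> - {w} = insert v0 (\<tau> - {v} - {w})" by blast
    moreover have "sg ?\<rho> w = - sg (\<tau> - {v}) w" using w mn f n by (intro sg_insert_less) auto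
    ultimately show "(if \<sigma> = ?\<rho> - {w} then sg ?\<rho> w else 0)
        = (if \<sigma> = insert v0 (\<tau> - {v} - {w}) then - sg (\<tau> - {v}) w else 0)" by simp
  qed
  finally show ?thesis .
qed

lemma cone_id:
  assumes fin: "finite \<tau>" and v0: "v0 \<notin> \<tau>" and mn: "\<forall>u\<in>\<tau>. v0 < u"
  shows "eb \<tau> \<sigma> = (\<Sum>v\<in>\<tau>. sg \<tau> v * eb (insert v0 (\<tau> - {v})) \<sigma>)"
proof -
  define F where "F = (\<lambda>(v, w). if \<sigma> = insert v0 (\<tau> - {v} - {w}) then - (sg \<tau> v * sg (\<tau> - {v}) w) else 0)"
  have "(\<Sum>v\<in>\<tau>. sg \<tau> v * eb (insert v0 (\<tau> - {v})) \<sigma>)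
     = (\<Sum>v\<in>\<tau>. (if \<sigma> = \<tau> - {v} then sg \<tau> v else 0) + (\<Sum>w\<in>\<tau> - {v}. F (v, w)))"
  proof (intro sum.cong refl)
    fix v assume v: "v \<in> \<tau>"
    show "sg \<tau> v * eb (insert v0 (\<tau> - {v})) \<sigma> = (if \<sigma> = \<tau> - {v} then sg \<tau> v else 0) + (\<Sum>w\<in>\<tau> - {v}. F (v, w))"
      unfolding eb_cone_eval[OF fin v0 mn v] F_def
      by (simp add: distrib_left sum_distrib_left if_distrib cong: if_cong)
  qed
  also have "\<dots> = eb \<tau> \<sigma> + (\<Sum>v\<in>\<tau>. \<Sum>w\<in>\<tau> - {v}. F (v, w))"
    unfolding eb_def by (simp add: sum.distrib)
  also have "(\<Sum>v\<in>\<tau>. \<Sum>w\<in>\<tau> - {v}. F (v, w)) = (\<Sum>p\<in>Sigma \<tau> (\<lambda>v. \<tau> - {v}). F p)"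
    using fin by (subst sum.Sigma) auto
  also have "Sigma \<tau> (\<lambda>v. \<tau> - {v}) = {(v, w). v \<in> \<tau> \<and> w \<in> \<tau> \<and> v \<noteq> w}" by auto
  also have "(\<Sum>p\<in>{(v, w). v \<in> \<tau> \<and> w \<in> \<tau> \<and> v \<noteq> w}. F p) = 0"
  proof (rule pair_cancel[OF fin])
    fix v w assume vw: "v \<in> \<tau>" "w \<in> \<tau>" "v \<noteq> w"
    have "\<tau> - {w} - {v} = \<tau> - {v} - {w}" by blast
    then show "F (w, v) = - F (v, w)" unfolding F_def using sg_anti[OF fin vw] by simp
  qed
  finally show ?thesis by simp
qed

lemma tri_inj:
  fixes h :: "'x \<Rightarrow> 'y \<Rightarrow> real"
  assumes hp: "\<And>x y. x \<in> X \<Longrightarrow> y \<in> X \<Longrightarrow> h x (p y) = (if x = y then 1 else 0)"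
  shows "inj_on h X"
proof (rule inj_onI)
  fix x x' assume xx: "x \<in> X" "x' \<in> X" "h x = h x'"
  have "h x (p x') = h x' (p x')" using xx(3) by simp
  then show "x = x'" using hp[OF xx(1,2)] hp[OF xx(2,2)] by (auto split: if_splits)
qed

lemma tri_eval:
  fixes h :: "'x \<Rightarrow> 'y \<Rightarrow> real"
  assumes fin: "finite X" and hp: "\<And>x y. x \<in> X \<Longrightarrow> y \<in> X \<Longrightarrow> h x (p y) = (if x = y then 1 else 0)"
    and y: "y \<in> X"
  shows "inj_on h X" "(\<Sum>g\<in>h ` X. (\<lambda>z. c g * g z)) (p y) = c (h y)"
proof -
  show inj: "inj_on h X" using hp by (rule tri_inj)
  have "(\<Sum>g\<in>h ` X. (\<lambda>z. c g * g z)) (p y) = (\<Sum>g\<in>h ` X. c g * g (p y))"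
    by (simp add: sum_fun_apply)
  also have "\<dots> = (\<Sum>x\<in>X. c (h x) * h x (p y))"
    by (subst sum.reindex[OF inj]) simp
  also have "\<dots> = (\<Sum>x\<in>X. if x = y then c (h y) else 0)"
    by (intro sum.cong refl) (simp add: hp[OF _ y])
  also have "\<dots> = c (h y)" using fin y by simp
  finally show "(\<Sum>g\<in>h ` X. (\<lambda>z. c g * g z)) (p y) = c (h y)" .
qed

lemma tri_indep:
  fixes h :: "'x \<Rightarrow> 'y \<Rightarrow> real"
  assumes fin: "finite X" and hp: "\<And>x y. x \<in> X \<Longrightarrow> y \<in> X \<Longrightarrow> h x (p y) = (if x = y then 1 else 0)"
  shows "fs.independent (h ` X)"
proof (rule fs.independent_if_scalars_zero)
  show "finite (h ` X)" using fin by simp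
next
  fix c g assume s: "(\<Sum>g\<in>h ` X. (\<lambda>z. c g * g z)) = 0" and g: "g \<in> h ` X"
  then obtain y where y: "y \<in> X" "g = h y" by blast
  have "c (h y) = (\<Sum>g\<in>h ` X. (\<lambda>z. c g * g z)) (p y)" using tri_eval(2)[where X=X and h=h and p=p, OF fin hp y(1)] by simp
  also have "\<dots> = 0" using s by simp
  finally show "c g = 0" using y by simp
qed

lemma tri_det:
  fixes h :: "'x \<Rightarrow> 'y \<Rightarrow> real"
  assumes fin: "finite X" and hp: "\<And>x y. x \<in> X \<Longrightarrow> y \<in> X \<Longrightarrow> h x (p y) = (if x = y then 1 else 0)"
    and u: "u \<in> fs.span (h ` X)" and z: "\<And>y. y \<in> X \<Longrightarrow> u (p y) = 0"
  shows "u = 0"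
proof -
  have "u \<in> range (\<lambda>c. \<Sum>g\<in>h ` X. (\<lambda>z. c g * g z))"
    using u fs.span_finite[of "h ` X"] fin by simp
  then obtain c where c: "u = (\<Sum>g\<in>h ` X. (\<lambda>z. c g * g z))" by blast
  have "\<forall>g\<in>h ` X. c g = 0"
  proof
    fix g assume "g \<in> h ` X"
    then obtain y where y: "y \<in> X" "g = h y" by blast
    have "c (h y) = u (p y)" using tri_eval(2)[where X=X and h=h and p=p, OF fin hp y(1)] c by simp
    then show "c g = 0" using z[OF y(1)] y(2) by simp
  qed
  then have "u = (\<Sum>g\<in>h ` X. 0)" unfolding c by (intro sum.cong refl) (auto simp: zero_fun_def)
  then show ?thesis by simp
qed

definition cone :: "'a::linorder set \<Rightarrow> nat \<Rightarrow> 'a set set" where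
  "cone V r = {\<rho>. \<rho> \<subseteq> V \<and> card \<rho> = Suc r \<and> Min V \<in> \<rho>}"

definition allr :: "'a set \<Rightarrow> nat \<Rightarrow> 'a set set" where
  "allr V r = {\<rho>. \<rho> \<subseteq> V \<and> card \<rho> = Suc r}"

lemma cone_finite: "finite V \<Longrightarrow> finite (cone V r)"
  unfolding cone_def by (rule finite_subset[of _ "Pow V"]) auto

lemma min_less:
  assumes "finite V" "u \<in> V" "u \<noteq> Min V"
  shows "Min V < u"
  using assms Min_le[OF assms(1,2)] by (simp add: order.not_eq_order_implies_strict)

lemma cone_tri:
  assumes fV: "finite V" and x: "x \<in> cone V r" and y: "y \<in> cone V r"
  shows "eb x (y - {Min V}) = (if x = y then 1 else 0)"
proof (cases "x = y")
  case True
  have fx: "finite x" using x fV unfolding cone_def by (auto intro: finite_subset)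
  have m: "Min V \<in> x" and xV: "x \<subseteq> V" using x unfolding cone_def by auto
  have "eb x (x - {Min V}) = sg x (Min V)" by (rule eb_at[OF fx m])
  also have "{u \<in> x. u < Min V} = {}" using xV fV Min_le by fastforce
  then have "sg x (Min V) = 1" unfolding sg_def by (simp only: card.empty power_0)
  finally show ?thesis using True by simp
next
  case False
  have mx: "Min V \<in> x" and my: "Min V \<in> y" using x y unfolding cone_def by auto
  have "eb x (y - {Min V}) = 0"
  proof (rule eb_zero)
    fix v assume v: "v \<in> x"
    show "y - {Min V} \<noteq> x - {v}"
    proof
      assume e: "y - {Min V} = x - {v}"
      show False
      proof (cases "v = Min V")
        case True
        then have "y = x" using e mx my by blast
        then show False using False by simp
      next
        case False
        then have "Min V \<in> x - {v}" using mx by blast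
        then show False using e by blast
      qed
    qed
  qed
  then show ?thesis using False by simp
qed

lemma cone_indep: "finite V \<Longrightarrow> fs.independent (eb ` cone V r)"
  by (rule tri_indep[where X="cone V r" and h=eb and p="\<lambda>y. y - {Min V}"]) (auto simp: cone_tri cone_finite)

lemma cone_inj: "finite V \<Longrightarrow> inj_on eb (cone V r)"
  by (rule tri_inj[where X="cone V r" and h=eb and p="\<lambda>y. y - {Min V}"]) (auto simp: cone_tri cone_finite)

lemma cone_dim: assumes "finite V" shows "fs.dim (eb ` cone V r) = card (cone V r)"
  using fs.dim_eq_card_independent[OF cone_indep[OF assms]] card_image[OF cone_inj[OF assms]] by simp

lemma cone_det:
  assumes fV: "finite V" and u: "u \<in> fs.span (eb ` cone V r)"
    and z: "\<And>x. Min V \<notin> x \<Longrightarrow> u x = 0"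
  shows "u = 0"
  by (rule tri_det[where X="cone V r" and h=eb and p="\<lambda>y. y - {Min V}"]) (auto simp: cone_tri cone_finite fV u z)

lemma allr_in_cone_span:
  assumes fV: "finite V" and t: "\<tau> \<in> allr V r"
  shows "eb \<tau> \<in> fs.span (eb ` cone V r)"
proof (cases "Min V \<in> \<tau>")
  case True
  then have "\<tau> \<in> cone V r" using t unfolding allr_def cone_def by auto
  then show ?thesis by (intro fs.span_base imageI)
next
  case False
  have tV: "\<tau> \<subseteq> V" and ct: "card \<tau> = Suc r" using t unfolding allr_def by auto
  have ft: "finite \<tau>" using tV fV by (auto intro: finite_subset)
  have mn: "\<forall>u\<in>\<tau>. Min V < u" using False tV fV min_less by blast
  have Vne: "V \<noteq> {}" using ct tV by auto
  have mV: "Min V \<in> V" using fV Vne by simp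
  have "eb \<tau> = (\<Sum>v\<in>\<tau>. (\<lambda>\<sigma>. sg \<tau> v * eb (insert (Min V) (\<tau> - {v})) \<sigma>))"
    by (rule ext) (simp add: sum_fun_apply cone_id[OF ft False mn])
  also have "\<dots> \<in> fs.span (eb ` cone V r)"
  proof (intro fs.span_sum)
    fix v assume v: "v \<in> \<tau>"
    have "insert (Min V) (\<tau> - {v}) \<in> cone V r"
      unfolding cone_def using tV mV v ct ft False by (auto simp: card_insert_if)
    then have "eb (insert (Min V) (\<tau> - {v})) \<in> fs.span (eb ` cone V r)" by (intro fs.span_base imageI)
    then show "(\<lambda>\<sigma>. sg \<tau> v * eb (insert (Min V) (\<tau> - {v})) \<sigma>) \<in> fs.span (eb ` cone V r)"
      by (rule fs.span_scale)
  qed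
  finally show ?thesis .
qed

lemma card_cone:
  assumes fV: "finite V" and ne: "V \<noteq> {}"
  shows "card (cone V r) = (card V - 1) choose r"
proof -
  let ?m = "Min V"
  have mV: "?m \<in> V" using fV ne by simp
  have "cone V r = insert ?m ` {\<sigma>. \<sigma> \<subseteq> V - {?m} \<and> card \<sigma> = r}"
  proof (rule set_eqI, rule iffI)
    fix \<rho> assume "\<rho> \<in> cone V r"
    then have r: "\<rho> \<subseteq> V" "card \<rho> = Suc r" "?m \<in> \<rho>" unfolding cone_def by auto
    have fr: "finite \<rho>" using r(1) fV by (auto intro: finite_subset)
    have "\<rho> = insert ?m (\<rho> - {?m})" using r(3) by blast
    moreover have "\<rho> - {?m} \<subseteq> V - {?m}" "card (\<rho> - {?m}) = r" using r fr by auto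
    ultimately show "\<rho> \<in> insert ?m ` {\<sigma>. \<sigma> \<subseteq> V - {?m} \<and> card \<sigma> = r}" by blast
  next
    fix \<rho> assume "\<rho> \<in> insert ?m ` {\<sigma>. \<sigma> \<subseteq> V - {?m} \<and> card \<sigma> = r}"
    then obtain \<sigma> where s: "\<rho> = insert ?m \<sigma>" "\<sigma> \<subseteq> V - {?m}" "card \<sigma> = r" by blast
    have fs: "finite \<sigma>" using s(2) fV by (auto intro: finite_subset)
    have "?m \<notin> \<sigma>" using s(2) by blast
    then show "\<rho> \<in> cone V r" unfolding cone_def using s fs mV by auto
  qed
  also have "card \<dots> = card {\<sigma>. \<sigma> \<subseteq> V - {?m} \<and> card \<sigma> = r}"
    by (rule card_image) (auto simp: inj_on_def)
  also have "\<dots> = card (V - {?m}) choose r" using fV by (simp add: n_subsets)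
  also have "card (V - {?m}) = card V - 1" using mV fV by simp
  finally show ?thesis .
qed

lemma facet_above:
  assumes sc: "simplicial_complex K" and F: "F \<in> K"
  shows "\<exists>G\<in>facets K. F \<subseteq> G"
proof -
  obtain m where m: "m \<in> K" "F \<subseteq> m" "\<forall>b\<in>K. m \<subseteq> b \<longrightarrow> m = b"
    using finite_has_maximal2[OF sc_finite(2)[OF sc] F] by blast
  then have "m \<in> facets K" unfolding facets_def by auto
  then show ?thesis using m(2) by blast
qed

lemma class_sc: "K \<in> cplx_class n r \<beta> \<Longrightarrow> simplicial_complex K"
  unfolding cplx_class_def by simp

lemma class_card: "K \<in> cplx_class n r \<beta> \<Longrightarrow> card (vertices K) = n"
  unfolding cplx_class_def by simp

lemma class_betti: "K \<in> cplx_class n r \<beta> \<Longrightarrow> betti K r = \<beta>"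
  unfolding cplx_class_def by simp

lemma class_face: "K \<in> cplx_class n r \<beta> \<Longrightarrow> \<exists>F\<in>K. card F = r + 1"
  unfolding cplx_class_def by simp

lemma face_card_le:
  assumes K: "K \<in> cplx_class n r \<beta>" and F: "F \<in> K"
  shows "card F \<le> Suc r"
proof -
  have sc: "simplicial_complex K" using K by (rule class_sc)
  obtain G where G: "G \<in> facets K" "F \<subseteq> G" using facet_above[OF sc F] by blast
  have "card G = r + 1" using K G(1) unfolding cplx_class_def pure_dim_def by blast
  moreover have "G \<in> K" using G(1) unfolding facets_def by blast
  ultimately show ?thesis using card_mono[OF sc_finite(3)[OF sc] G(2)] by simp
qed

lemma facets_eq:
  assumes K: "K \<in> cplx_class n r \<beta>"
  shows "facets K = faces K r"
proof
  show "facets K \<subseteq> faces K r"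
    using K unfolding cplx_class_def pure_dim_def facets_def faces_def by auto
next
  show "faces K r \<subseteq> facets K"
  proof
    fix F assume F: "F \<in> faces K r"
    have sc: "simplicial_complex K" using K by (rule class_sc)
    have FK: "F \<in> K" and cF: "card F = Suc r" using F unfolding faces_def by auto
    have "\<forall>G\<in>K. F \<subseteq> G \<longrightarrow> G = F"
    proof (intro ballI impI)
      fix G assume G: "G \<in> K" "F \<subseteq> G"
      have "card G \<le> Suc r" using face_card_le[OF K G(1)] .
      then show "G = F" using card_subset_eq[OF sc_finite(3)[OF sc G(1)] G(2)] cF card_mono[OF sc_finite(3)[OF sc G(1)] G(2)]
        by simp
    qed
    then show "F \<in> facets K" using FK unfolding facets_def by blast
  qed
qed

lemma no_higher:
  assumes K: "K \<in> cplx_class n r \<beta>"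
  shows "faces K (Suc r) = {}"
  using face_card_le[OF K] unfolding faces_def by fastforce

lemma betti_eq':
  fixes K :: "'a::linorder set set"
  assumes le: "\<And>F. F \<in> K \<Longrightarrow> card F \<le> Suc r"
  shows "betti K r = fs.dim (cycles K r)"
proof -
  have nh: "faces K (Suc r) = {}" using le unfolding faces_def by fastforce
  have ch: "chains K (Suc r) = {0}"
    using nh unfolding chains_def by (auto simp: fun_eq_iff)
  have b0: "boundary K (Suc r) 0 = 0"
  proof -
    interpret L: Vector_Spaces.linear "\<lambda>(a::real) (f::'a set \<Rightarrow> real) x. a * f x"
      "\<lambda>(a::real) (f::'a set \<Rightarrow> real) x. a * f x" "boundary K (Suc r)" by (rule lin_bd)
    show ?thesis by (rule L.zero)
  qed
  have "bdries K r = {0}" unfolding bdries_def ch using b0 by simp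
  moreover have "fs.dim {0::'a set \<Rightarrow> real} = 0"
    using fs.dim_le_card[of "{0::'a set \<Rightarrow> real}" "{}"] by simp
  ultimately show ?thesis unfolding betti_def rdim_eq by simp
qed

lemma betti_eq:
  assumes K: "K \<in> cplx_class n r \<beta>"
  shows "betti K r = fs.dim (cycles K r)"
  by (rule betti_eq', rule face_card_le[OF K])

lemma supp_span:
  assumes fA: "finite A" and f: "\<And>x. f x \<noteq> 0 \<Longrightarrow> x \<in> A"
  shows "f \<in> fs.span (ind ` A)"
proof -
  have "f = (\<Sum>\<tau>\<in>A. (\<lambda>z. f \<tau> * ind \<tau> z))"
  proof
    fix z
    have "(\<Sum>\<tau>\<in>A. (\<lambda>z. f \<tau> * ind \<tau> z)) z = (\<Sum>\<tau>\<in>A. if \<tau> = z then f z else 0)"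
      unfolding sum_fun_apply ind_def by (intro sum.cong refl) auto
    also have "\<dots> = f z" using fA f by (cases "z \<in> A") auto
    finally show "f z = (\<Sum>\<tau>\<in>A. (\<lambda>z. f \<tau> * ind \<tau> z)) z" by simp
  qed
  also have "\<dots> \<in> fs.span (ind ` A)"
    by (intro fs.span_sum fs.span_scale[of "ind _" "ind ` A", simplified] fs.span_base imageI)
  finally show ?thesis .
qed

lemma ind_tri: "ind x (id y) = (if x = y then 1 else 0)"
  unfolding ind_def by auto

lemma chains_dim:
  assumes sc: "simplicial_complex K"
  shows "fs.dim (chains K i) = card (faces K i)"
proof -
  have fF: "finite (faces K i)" by (rule faces_finite[OF sc])
  have "fs.span (ind ` faces K i) = chains K i"
  proof (rule fs.span_subspace)
    show "ind ` faces K i \<subseteq> chains K i" using ind_chain by blast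
    show "chains K i \<subseteq> fs.span (ind ` faces K i)"
      using supp_span[OF fF] unfolding chains_def by blast
    show "fs.subspace (chains K i)" by (rule chains_subspace)
  qed
  then have "fs.dim (chains K i) = fs.dim (ind ` faces K i)" using fs.dim_span by metis
  also have "\<dots> = card (ind ` faces K i)"
    by (rule fs.dim_eq_card_independent, rule tri_indep[where p=id, OF fF ind_tri])
  also have "\<dots> = card (faces K i)" by (rule card_image, rule tri_inj[where p=id, OF ind_tri])
  finally show ?thesis .
qed

lemma key_ineq:
  assumes K: "K \<in> cplx_class n r \<beta>" and r: "0 < r"
  shows "card (facets K) \<le> \<beta> + fs.dim (boundary K r ` chains K r)"
proof -
  have sc: "simplicial_complex K" using K by (rule class_sc)
  have "card (facets K) = fs.dim (chains K r)" using facets_eq[OF K] chains_dim[OF sc] by simp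
  also have "\<dots> \<le> fs.dim (chains K r \<inter> {x. boundary K r x = 0}) + fs.dim (boundary K r ` chains K r)"
  proof (rule rank_nullity_le[OF lin_bd chains_subspace])
    show "finite (ind ` faces K r)" using faces_finite[OF sc] by simp
    show "chains K r \<subseteq> fs.span (ind ` faces K r)"
      using supp_span[OF faces_finite[OF sc]] unfolding chains_def by blast
  qed
  also have "chains K r \<inter> {x. boundary K r x = 0} = cycles K r" unfolding cycles_def by auto
  also have "fs.dim (cycles K r) = \<beta>" using betti_eq[OF K] class_betti[OF K] by simp
  finally show ?thesis .
qed

lemma W_sub:
  fixes K :: "'a::linorder set set"
  assumes sc: "simplicial_complex K" and r: "0 < r"
  shows "boundary K r ` chains K r \<subseteq> fs.span (eb ` cone (vertices K) r)"
proof
  fix w assume "w \<in> boundary K r ` chains K r"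
  then obtain c where c: "c \<in> chains K r" "w = boundary K r c" by blast
  have "eb ` faces K r \<subseteq> fs.span (eb ` cone (vertices K) r)"
  proof
    fix g assume "g \<in> eb ` faces K r"
    then obtain \<tau> where t: "\<tau> \<in> faces K r" "g = eb \<tau>" by blast
    have "\<tau> \<in> allr (vertices K) r" using t(1) sc_finite(4)[OF sc] unfolding faces_def allr_def by auto
    then show "g \<in> fs.span (eb ` cone (vertices K) r)" using allr_in_cone_span[OF sc_finite(1)[OF sc]] t(2) by blast
  qed
  then have "fs.span (eb ` faces K r) \<subseteq> fs.span (eb ` cone (vertices K) r)"
    by (rule fs.span_minimal) simp
  then show "w \<in> fs.span (eb ` cone (vertices K) r)" using bd_span[OF sc r c(1)] c(2) by blast
qed

lemma W_dim:
  fixes K :: "'a::linorder set set"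
  assumes sc: "simplicial_complex K" and r: "0 < r"
  shows "fs.dim (boundary K r ` chains K r) \<le> card (cone (vertices K) r)"
proof -
  have f: "finite (cone (vertices K) r)" by (rule cone_finite[OF sc_finite(1)[OF sc]])
  have "fs.dim (boundary K r ` chains K r) \<le> card (eb ` cone (vertices K) r)"
    by (rule fs.dim_le_card[OF W_sub[OF sc r]]) (simp add: f)
  also have "\<dots> \<le> card (cone (vertices K) r)" by (rule card_image_le[OF f])
  finally show ?thesis .
qed

lemma vert_ne:
  assumes K: "K \<in> cplx_class n r \<beta>"
  shows "vertices K \<noteq> {}" "Suc r \<le> n"
proof -
  have sc: "simplicial_complex K" using K by (rule class_sc)
  obtain F where F: "F \<in> K" "card F = r + 1" using class_face[OF K] by blast
  have "F \<subseteq> vertices K" using sc_finite(4)[OF sc F(1)] .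
  then show "vertices K \<noteq> {}" using F(2) by auto
  show "Suc r \<le> n" using F(2) card_mono[OF sc_finite(1)[OF sc] \<open>F \<subseteq> vertices K\<close>] class_card[OF K] by simp
qed

lemma UB:
  assumes K: "K \<in> cplx_class n r \<beta>" and r: "0 < r"
  shows "card (facets K) \<le> \<beta> + ((n - 1) choose r)"
proof -
  have sc: "simplicial_complex K" using K by (rule class_sc)
  have "card (facets K) \<le> \<beta> + fs.dim (boundary K r ` chains K r)" by (rule key_ineq[OF K r])
  also have "\<dots> \<le> \<beta> + card (cone (vertices K) r)" using W_dim[OF sc r] by simp
  also have "card (cone (vertices K) r) = (n - 1) choose r"
    using card_cone[OF sc_finite(1)[OF sc] vert_ne(1)[OF K]] class_card[OF K] by simp
  finally show ?thesis .
qed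

lemma cycles_subspace: "fs.subspace (cycles (K::'a::linorder set set) i)"
proof -
  interpret L: Vector_Spaces.linear "\<lambda>(a::real) (f::'a set \<Rightarrow> real) x. a * f x"
    "\<lambda>(a::real) (f::'a set \<Rightarrow> real) x. a * f x" "boundary K i" by (rule lin_bd)
  have cs: "fs.subspace (chains K i)" by (rule chains_subspace)
  show ?thesis unfolding fs.subspace_def cycles_def
  proof (intro conjI ballI allI)
    show "0 \<in> {c \<in> chains K i. boundary K i c = 0}" using fs.subspace_0[OF cs] L.zero by simp
  next
    fix x y assume "x \<in> {c \<in> chains K i. boundary K i c = 0}" "y \<in> {c \<in> chains K i. boundary K i c = 0}"
    then show "x + y \<in> {c \<in> chains K i. boundary K i c = 0}"
      using fs.subspace_add[OF cs] L.add by simp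
  next
    fix c x assume "x \<in> {c \<in> chains K i. boundary K i c = 0}"
    then show "(\<lambda>xa. c * x xa) \<in> {c \<in> chains K i. boundary K i c = 0}"
      using fs.subspace_scale[OF cs] L.scale[of c x] by (simp add: zero_fun_def)
  qed
qed

lemma cyc_det:
  fixes K :: "'a::linorder set set"
  assumes sc: "simplicial_complex K" and r: "0 < r" and z: "z \<in> cycles K r"
    and av: "\<And>x. Min (vertices K) \<notin> x \<Longrightarrow> z x = 0"
  shows "z = 0"
proof (rule ext, rule ccontr)
  fix \<tau> assume nz: "z \<tau> \<noteq> 0 \<tau>"
  let ?V = "vertices K"
  let ?m = "Min ?V"
  have zc: "z \<in> chains K r" and zb: "boundary K r z = 0" using z unfolding cycles_def by auto
  have tf: "\<tau> \<in> faces K r" using zc nz unfolding chains_def by auto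
  have tK: "\<tau> \<in> K" and ct: "card \<tau> = Suc r" using tf unfolding faces_def by auto
  have mt: "?m \<in> \<tau>" using av nz by auto
  have fV: "finite ?V" by (rule sc_finite(1)[OF sc])
  have ft: "finite \<tau>" by (rule sc_finite(3)[OF sc tK])
  have tV: "\<tau> \<subseteq> ?V" by (rule sc_finite(4)[OF sc tK])
  define \<sigma> where "\<sigma> = \<tau> - {?m}"
  have sf: "\<sigma> \<in> faces K (r - 1)" unfolding faces_def \<sigma>_def
    using sc_finite(5)[OF sc tK, of "\<tau> - {?m}"] ct ft mt r by auto
  have mV: "?m \<in> ?V - \<sigma>" using mt tV unfolding \<sigma>_def by auto
  have "0 = boundary K r z \<sigma>" using zb by simp
  also have "\<dots> = (\<Sum>v\<in>?V - \<sigma>. if insert v \<sigma> \<in> K then (-1) ^ card {u\<in>\<sigma>. u < v} * z (insert v \<sigma>) else 0)"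
    unfolding boundary_def using sf r by simp
  also have "\<dots> = (if insert ?m \<sigma> \<in> K then (-1) ^ card {u\<in>\<sigma>. u < ?m} * z (insert ?m \<sigma>) else 0)
     + (\<Sum>v\<in>?V - \<sigma> - {?m}. if insert v \<sigma> \<in> K then (-1) ^ card {u\<in>\<sigma>. u < v} * z (insert v \<sigma>) else 0)"
    using mV fV by (simp add: sum.remove)
  also have "(\<Sum>v\<in>?V - \<sigma> - {?m}. if insert v \<sigma> \<in> K then (-1) ^ card {u\<in>\<sigma>. u < v} * z (insert v \<sigma>) else 0) = 0"
  proof (intro sum.neutral ballI)
    fix v assume "v \<in> ?V - \<sigma> - {?m}"
    then have "?m \<notin> insert v \<sigma>" unfolding \<sigma>_def by auto
    then show "(if insert v \<sigma> \<in> K then (-1) ^ card {u\<in>\<sigma>. u < v} * z (insert v \<sigma>) else 0) = 0"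
      using av by simp
  qed
  also have "insert ?m \<sigma> = \<tau>" unfolding \<sigma>_def using mt by auto
  also have "{u\<in>\<sigma>. u < ?m} = {}" using tV fV Min_le unfolding \<sigma>_def by fastforce
  finally have "z \<tau> = 0" using tK by simp
  then show False using nz by simp
qed

definition avoid :: "'a::linorder set \<Rightarrow> nat \<Rightarrow> 'a set set" where
  "avoid V r = {\<tau>. \<tau> \<subseteq> V - {Min V} \<and> card \<tau> = Suc r}"

lemma avoid_finite: "finite V \<Longrightarrow> finite (avoid V r)"
  unfolding avoid_def by (rule finite_subset[of _ "Pow V"]) auto

lemma dim_cycles_le:
  fixes K :: "'a::linorder set set"
  assumes sc: "simplicial_complex K" and r: "0 < r"
  shows "fs.dim (cycles K r) \<le> card (avoid (vertices K) r)"
proof -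
  let ?V = "vertices K"
  let ?A = "avoid ?V r"
  define R where "R = (\<lambda>(z::'a set \<Rightarrow> real) x. if x \<in> ?A then z x else 0)"
  have linR: "Vector_Spaces.linear (\<lambda>(a::real) (f::'a set \<Rightarrow> real) x. a * f x)
     (\<lambda>(a::real) (f::'a set \<Rightarrow> real) x. a * f x) R"
    unfolding Vector_Spaces.linear_iff R_def by (auto simp: vs_fun fun_eq_iff)
  interpret L: Vector_Spaces.linear "\<lambda>(a::real) (f::'a set \<Rightarrow> real) x. a * f x"
    "\<lambda>(a::real) (f::'a set \<Rightarrow> real) x. a * f x" R by (rule linR)
  obtain B where B: "B \<subseteq> cycles K r" "fs.independent B" "cycles K r \<subseteq> fs.span B" "card B = fs.dim (cycles K r)"
    by (rule fs.basis_exists)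
  have spB: "fs.span B \<subseteq> cycles K r" using B(1) cycles_subspace by (rule fs.span_minimal)
  have inj: "inj_on R (fs.span B)"
  proof (rule inj_onI)
    fix x y assume x: "x \<in> fs.span B" and y: "y \<in> fs.span B" and e: "R x = R y"
    have xy: "x - y \<in> cycles K r" using fs.subspace_diff[OF cycles_subspace] x y spB by blast
    have "x - y = 0"
    proof (rule cyc_det[OF sc r xy])
      fix t assume mt: "Min ?V \<notin> t"
      show "(x - y) t = 0"
      proof (cases "t \<in> ?A")
        case True
        then show ?thesis using fun_cong[OF e, of t] unfolding R_def by simp
      next
        case False
        show ?thesis
        proof (rule ccontr)
          assume "(x - y) t \<noteq> 0"
          then have "t \<in> faces K r" using xy unfolding cycles_def chains_def by blast
          then have "t \<subseteq> ?V" "card t = Suc r" using sc_finite(4)[OF sc] unfolding faces_def by auto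
          then have "t \<in> ?A" using mt unfolding avoid_def by auto
          then show False using False by simp
        qed
      qed
    qed
    then show "x = y" by simp
  qed
  have fA: "finite ?A" by (rule avoid_finite[OF sc_finite(1)[OF sc]])
  have indR: "fs.independent (R ` B)" by (rule L.independent_injective_image[OF B(2) inj])
  have "R ` B \<subseteq> fs.span (ind ` ?A)"
  proof
    fix g assume "g \<in> R ` B"
    then obtain z where "g = R z" by blast
    moreover have "R z \<in> fs.span (ind ` ?A)"
      by (rule supp_span[OF fA]) (simp add: R_def split: if_splits)
    ultimately show "g \<in> fs.span (ind ` ?A)" by simp
  qed
  then have "card (R ` B) \<le> card (ind ` ?A)" using fs.independent_span_bound[OF _ indR] fA by simp
  also have "\<dots> \<le> card ?A" by (rule card_image_le[OF fA])
  also have "card (R ` B) = card B"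
    using card_image[OF inj_on_subset[OF inj fs.span_superset]] .
  finally show ?thesis using B(4) by simp
qed

definition gen :: "'a::linorder set \<Rightarrow> nat \<Rightarrow> 'a set set \<Rightarrow> 'a set set" where
  "gen V r S = {\<sigma>. \<exists>\<rho>\<in>cone V r \<union> S. \<sigma> \<subseteq> \<rho>}"

definition zc :: "'a::linorder \<Rightarrow> 'a set \<Rightarrow> 'a set \<Rightarrow> real" where
  "zc m \<tau> = ind \<tau> - (\<Sum>v\<in>\<tau>. (\<lambda>x. sg \<tau> v * ind (insert m (\<tau> - {v})) x))"

lemma zc_apply: "zc m \<tau> x = ind \<tau> x - (\<Sum>v\<in>\<tau>. sg \<tau> v * ind (insert m (\<tau> - {v})) x)"
  unfolding zc_def by (simp add: sum_fun_apply)

lemma gen_elem: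
  assumes S: "S \<subseteq> avoid V r" and \<rho>: "\<rho> \<in> cone V r \<union> S"
  shows "\<rho> \<subseteq> V" "card \<rho> = Suc r"
  using S \<rho> unfolding cone_def avoid_def by auto

lemma cone_cover:
  assumes fV: "finite V" and r: "0 < r" and n: "Suc r \<le> card V" and u: "u \<in> V"
  shows "\<exists>\<rho>\<in>cone V r. u \<in> \<rho>"
proof -
  let ?m = "Min V"
  have mV: "?m \<in> V" using fV u by (auto intro: Min_in)
  show ?thesis
  proof (cases "u = ?m")
    case True
    have "r \<le> card (V - {?m})" using n mV fV by simp
    then obtain T where T: "T \<subseteq> V - {?m}" "card T = r" "finite T" by (rule obtain_subset_with_card_n)
    have "?m \<notin> T" using T(1) by blast
    then have "card (insert ?m T) = Suc r" using T by simp
    then have "insert ?m T \<in> cone V r" unfolding cone_def using T mV by auto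
    then show ?thesis using True by blast
  next
    case False
    have c2: "card (V - {?m, u}) = card V - 2" using mV u False fV by (simp add: card_Diff_subset)
    have "r - 1 \<le> card (V - {?m, u})" unfolding c2 using n by linarith
    then obtain T where T: "T \<subseteq> V - {?m, u}" "card T = r - 1" "finite T" by (rule obtain_subset_with_card_n)
    have nT1: "u \<notin> T" using T(1) by blast
    have nT2: "?m \<notin> insert u T" using T(1) False by blast
    have c1: "card (insert u T) = Suc (r - 1)" using card_insert_disjoint[OF T(3) nT1] T(2) by simp
    have fuT: "finite (insert u T)" using T(3) by (rule finite.insertI)
    have c: "card (insert ?m (insert u T)) = Suc r"
      using card_insert_disjoint[OF fuT nT2] c1 r by linarith
    have sV: "insert ?m (insert u T) \<subseteq> V" unfolding insert_subset using T(1) mV u by blast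
    have cc: "insert ?m (insert u T) \<in> cone V r" unfolding cone_def by (rule CollectI, intro conjI sV c insertI1)
    have uu: "u \<in> insert ?m (insert u T)" by simp
    show ?thesis using uu cc by (rule bexI)
  qed
qed

lemma gen_vertices:
  assumes fV: "finite V" and r: "0 < r" and n: "Suc r \<le> card V" and S: "S \<subseteq> avoid V r"
  shows "vertices (gen V r S) = V"
proof
  show "vertices (gen V r S) \<subseteq> V" unfolding vertices_def gen_def using gen_elem[OF S] by blast
  show "V \<subseteq> vertices (gen V r S)"
  proof
    fix u assume "u \<in> V"
    then obtain \<rho> where "\<rho> \<in> cone V r" "u \<in> \<rho>" using cone_cover[OF fV r n] by blast
    then show "u \<in> vertices (gen V r S)" unfolding vertices_def gen_def by blast
  qed
qed

lemma gen_sc: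
  assumes fV: "finite V" and r: "0 < r" and n: "Suc r \<le> card V" and S: "S \<subseteq> avoid V r"
  shows "simplicial_complex (gen V r S)"
proof -
  have "V \<noteq> {}" using n by auto
  then have "Min V \<in> V" using fV by (rule Min_in[rotated])
  then obtain \<rho> where "\<rho> \<in> cone V r" using cone_cover[OF fV r n] by blast
  then have "{} \<in> gen V r S" unfolding gen_def by blast
  moreover have "finite (\<Union>(gen V r S))" using gen_vertices[OF assms] fV unfolding vertices_def by simp
  moreover have "\<forall>F\<in>gen V r S. \<forall>G. G \<subseteq> F \<longrightarrow> G \<in> gen V r S" unfolding gen_def by blast
  ultimately show ?thesis unfolding simplicial_complex_def by blast
qed

lemma gen_card_le:
  assumes fV: "finite V" and S: "S \<subseteq> avoid V r" and F: "F \<in> gen V r S"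
  shows "card F \<le> Suc r"
proof -
  obtain \<rho> where \<rho>: "\<rho> \<in> cone V r \<union> S" "F \<subseteq> \<rho>" using F unfolding gen_def by blast
  have "finite \<rho>" using gen_elem(1)[OF S \<rho>(1)] fV by (auto intro: finite_subset)
  then show ?thesis using card_mono[OF _ \<rho>(2)] gen_elem(2)[OF S \<rho>(1)] by simp
qed

lemma gen_faces:
  assumes fV: "finite V" and S: "S \<subseteq> avoid V r"
  shows "faces (gen V r S) r = cone V r \<union> S"
proof
  show "faces (gen V r S) r \<subseteq> cone V r \<union> S"
  proof
    fix F assume "F \<in> faces (gen V r S) r"
    then obtain \<rho> where \<rho>: "\<rho> \<in> cone V r \<union> S" "F \<subseteq> \<rho>" and cF: "card F = Suc r"
      unfolding faces_def gen_def by auto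
    have "finite \<rho>" using gen_elem(1)[OF S \<rho>(1)] fV by (auto intro: finite_subset)
    then have "F = \<rho>" using card_subset_eq[OF _ \<rho>(2)] cF gen_elem(2)[OF S \<rho>(1)] by simp
    then show "F \<in> cone V r \<union> S" using \<rho>(1) by simp
  qed
  show "cone V r \<union> S \<subseteq> faces (gen V r S) r"
    unfolding faces_def gen_def using gen_elem(2)[OF S] by auto
qed

lemma gen_facets:
  assumes fV: "finite V" and S: "S \<subseteq> avoid V r"
  shows "facets (gen V r S) = cone V r \<union> S"
proof
  show "facets (gen V r S) \<subseteq> cone V r \<union> S"
  proof
    fix F assume F: "F \<in> facets (gen V r S)"
    then obtain \<rho> where \<rho>: "\<rho> \<in> cone V r \<union> S" "F \<subseteq> \<rho>" unfolding facets_def gen_def by auto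
    have "\<rho> \<in> gen V r S" using \<rho>(1) unfolding gen_def by blast
    then have "\<rho> = F" using F \<rho>(2) unfolding facets_def by blast
    then show "F \<in> cone V r \<union> S" using \<rho>(1) by simp
  qed
  show "cone V r \<union> S \<subseteq> facets (gen V r S)"
  proof
    fix \<rho> assume \<rho>: "\<rho> \<in> cone V r \<union> S"
    have fr: "finite \<rho>" using gen_elem(1)[OF S \<rho>] fV by (auto intro: finite_subset)
    have "\<rho> \<in> gen V r S" using \<rho> unfolding gen_def by blast
    moreover have "\<forall>G\<in>gen V r S. \<rho> \<subseteq> G \<longrightarrow> G = \<rho>"
    proof (intro ballI impI)
      fix G assume G: "G \<in> gen V r S" "\<rho> \<subseteq> G"
      have "card G \<le> Suc r" by (rule gen_card_le[OF fV S G(1)])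
      obtain \<rho>' where \<rho>': "\<rho>' \<in> cone V r \<union> S" "G \<subseteq> \<rho>'" using G(1) unfolding gen_def by blast
      have "G \<subseteq> V" using \<rho>'(2) gen_elem(1)[OF S \<rho>'(1)] by (rule subset_trans)
      then have fG: "finite G" using fV by (rule finite_subset)
      have "card \<rho> \<le> card G" by (rule card_mono[OF fG G(2)])
      then have "card \<rho> = card G" using \<open>card G \<le> Suc r\<close> gen_elem(2)[OF S \<rho>] by simp
      then show "G = \<rho>" using card_subset_eq[OF fG G(2)] by simp
    qed
    ultimately show "\<rho> \<in> facets (gen V r S)" unfolding facets_def by blast
  qed
qed

lemma gen_betti:
  fixes V :: "'a::linorder set"
  assumes fV: "finite V" and r: "0 < r" and n: "Suc r \<le> card V" and S: "S \<subseteq> avoid V r"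
  shows "fs.dim (cycles (gen V r S) r) = card S"
proof -
  define K2 where "K2 = gen V r S"
  define m where "m = Min V"
  have sc: "simplicial_complex K2" unfolding K2_def by (rule gen_sc[OF fV r n S])
  have vK: "vertices K2 = V" unfolding K2_def by (rule gen_vertices[OF fV r n S])
  have fa: "faces K2 r = cone V r \<union> S" unfolding K2_def by (rule gen_faces[OF fV S])
  have Vne: "V \<noteq> {}" using n by auto
  have mV: "m \<in> V" unfolding m_def using fV Vne by (rule Min_in)
  have fS: "finite S" using avoid_finite[OF fV] S by (rule finite_subset[rotated])
  have Sp: "\<tau> \<subseteq> V" "m \<notin> \<tau>" "card \<tau> = Suc r" "finite \<tau>" if "\<tau> \<in> S" for \<tau>
  proof -
    have "\<tau> \<in> avoid V r" using S that by (rule subsetD)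
    then have t: "\<tau> \<subseteq> V - {m}" "card \<tau> = Suc r" unfolding avoid_def m_def by auto
    then show "\<tau> \<subseteq> V" "m \<notin> \<tau>" "card \<tau> = Suc r" by auto
    show "finite \<tau>" using t(1) fV by (metis finite_Diff finite_subset)
  qed
  have mlt: "\<forall>u\<in>\<tau>. m < u" if "\<tau> \<in> S" for \<tau>
    using Sp[OF that] min_less[OF fV] unfolding m_def by blast
  have rc: "insert m (\<tau> - {v}) \<in> cone V r" if t: "\<tau> \<in> S" and v: "v \<in> \<tau>" for \<tau> v
  proof -
    have c1: "card (\<tau> - {v}) = r" using Sp(3,4)[OF t] v by simp
    have nm: "m \<notin> \<tau> - {v}" using Sp(2)[OF t] by simp
    have "card (insert m (\<tau> - {v})) = Suc r" using c1 nm Sp(4)[OF t] by simp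
    moreover have "insert m (\<tau> - {v}) \<subseteq> V" using Sp(1)[OF t] mV by blast
    ultimately show ?thesis unfolding cone_def m_def by simp
  qed
  have conem: "m \<in> \<rho>" if "\<rho> \<in> cone V r" for \<rho> using that unfolding cone_def m_def by simp
  have ind_rho0: "ind (insert m (\<tau> - {v})) x = 0" if "m \<notin> x" for \<tau> v x
    unfolding ind_def using that by auto
  have ztri: "zc m \<tau> (id \<tau>') = (if \<tau> = \<tau>' then 1 else 0)" if "\<tau> \<in> S" "\<tau>' \<in> S" for \<tau> \<tau>'
  proof -
    have "(\<Sum>v\<in>\<tau>. sg \<tau> v * ind (insert m (\<tau> - {v})) \<tau>') = 0"
      using ind_rho0[OF Sp(2)[OF that(2)]] by simp
    then show ?thesis unfolding zc_apply id_def by (simp add: ind_def)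
  qed
  have z0: "zc m \<tau> x = 0" if "\<tau> \<in> S" "x \<notin> S" "m \<notin> x" for \<tau> x
  proof -
    have "(\<Sum>v\<in>\<tau>. sg \<tau> v * ind (insert m (\<tau> - {v})) x) = 0"
      using ind_rho0[OF that(3)] by simp
    moreover have "ind \<tau> x = 0" unfolding ind_def using that by auto
    ultimately show ?thesis unfolding zc_apply by simp
  qed
  have zch: "zc m \<tau> \<in> chains K2 r" if t: "\<tau> \<in> S" for \<tau>
    unfolding chains_def
  proof (intro CollectI allI impI)
    fix x assume nz: "zc m \<tau> x \<noteq> 0"
    show "x \<in> faces K2 r"
    proof (rule ccontr)
      assume "x \<notin> faces K2 r"
      then have x: "x \<notin> S" "x \<notin> cone V r" unfolding fa by auto
      have "(\<Sum>v\<in>\<tau>. sg \<tau> v * ind (insert m (\<tau> - {v})) x) = 0"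
      proof (intro sum.neutral ballI)
        fix v assume v: "v \<in> \<tau>"
        have "insert m (\<tau> - {v}) \<noteq> x" using rc[OF t v] x(2) by auto
        then show "sg \<tau> v * ind (insert m (\<tau> - {v})) x = 0" unfolding ind_def by simp
      qed
      moreover have "ind \<tau> x = 0" unfolding ind_def using t x(1) by auto
      ultimately have "zc m \<tau> x = 0" unfolding zc_apply by simp
      then show False using nz by simp
    qed
  qed
  interpret L: Vector_Spaces.linear "\<lambda>(a::real) (f::'a set \<Rightarrow> real) x. a * f x"
    "\<lambda>(a::real) (f::'a set \<Rightarrow> real) x. a * f x" "boundary K2 r" by (rule lin_bd)
  have zb: "boundary K2 r (zc m \<tau>) = 0" if t: "\<tau> \<in> S" for \<tau>
  proof -
    have tf: "\<tau> \<in> faces K2 r" unfolding fa using t by simp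
    have rf: "insert m (\<tau> - {v}) \<in> faces K2 r" if "v \<in> \<tau>" for v unfolding fa using rc[OF t that] by simp
    have "boundary K2 r (zc m \<tau>) = boundary K2 r (ind \<tau>)
        - (\<Sum>v\<in>\<tau>. boundary K2 r (\<lambda>x. sg \<tau> v * ind (insert m (\<tau> - {v})) x))"
      unfolding zc_def L.diff L.sum ..
    also have "\<dots> = eb \<tau> - (\<Sum>v\<in>\<tau>. (\<lambda>x. sg \<tau> v * eb (insert m (\<tau> - {v})) x))"
    proof -
      have "boundary K2 r (\<lambda>x. sg \<tau> v * ind (insert m (\<tau> - {v})) x) = (\<lambda>x. sg \<tau> v * eb (insert m (\<tau> - {v})) x)"
        if v: "v \<in> \<tau>" for v
        using L.scale[of "sg \<tau> v" "ind (insert m (\<tau> - {v}))"] bd_ind[OF sc r rf[OF v]] by simp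
      then show ?thesis using bd_ind[OF sc r tf] by (simp cong: sum.cong)
    qed
    also have "\<dots> = 0"
    proof
      fix \<sigma>
      have "eb \<tau> \<sigma> = (\<Sum>v\<in>\<tau>. sg \<tau> v * eb (insert m (\<tau> - {v})) \<sigma>)"
        by (rule cone_id[OF Sp(4)[OF t] Sp(2)[OF t] mlt[OF t]])
      then show "(eb \<tau> - (\<Sum>v\<in>\<tau>. (\<lambda>x. sg \<tau> v * eb (insert m (\<tau> - {v})) x))) \<sigma> = 0 \<sigma>"
        by (simp add: sum_fun_apply)
    qed
    finally show ?thesis .
  qed
  have zin: "zc m ` S \<subseteq> cycles K2 r" unfolding cycles_def using zch zb by blast
  have spc: "fs.span (zc m ` S) \<subseteq> cycles K2 r" using zin cycles_subspace by (rule fs.span_minimal)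
  have "cycles K2 r \<subseteq> fs.span (zc m ` S)"
  proof
    fix z assume z: "z \<in> cycles K2 r"
    define s where "s = (\<Sum>\<tau>\<in>S. (\<lambda>x. z \<tau> * zc m \<tau> x))"
    have ss: "s \<in> fs.span (zc m ` S)" unfolding s_def
      by (intro fs.span_sum fs.span_scale[of "zc m _" "zc m ` S", simplified] fs.span_base imageI)
    have yc: "z - s \<in> cycles K2 r" using fs.subspace_diff[OF cycles_subspace z] ss spc by blast
    have "z - s = 0"
    proof (rule cyc_det[OF sc r yc])
      fix x assume "Min (vertices K2) \<notin> x"
      then have mx: "m \<notin> x" unfolding vK m_def .
      show "(z - s) x = 0"
      proof (cases "x \<in> S")
        case True
        have "s x = (\<Sum>\<tau>\<in>S. z \<tau> * zc m \<tau> (id x))" unfolding s_def by (simp add: sum_fun_apply)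
        also have "\<dots> = (\<Sum>\<tau>\<in>S. if \<tau> = x then z x else 0)"
        proof (intro sum.cong refl)
          fix \<tau> assume t: "\<tau> \<in> S"
          show "z \<tau> * zc m \<tau> (id x) = (if \<tau> = x then z x else 0)"
            using ztri[OF t True] by simp
        qed
        also have "\<dots> = z x" using fS True by simp
        finally show ?thesis by simp
      next
        case False
        have "s x = (\<Sum>\<tau>\<in>S. z \<tau> * zc m \<tau> x)" unfolding s_def by (simp add: sum_fun_apply)
        also have "\<dots> = 0" by (intro sum.neutral ballI) (simp add: z0[OF _ False mx])
        finally have sx: "s x = 0" .
        have "z x = 0"
        proof (rule ccontr)
          assume "z x \<noteq> 0"
          then have "x \<in> faces K2 r" using z unfolding cycles_def chains_def by blast
          then have "x \<in> cone V r" using False unfolding fa by simp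
          then show False using conem mx by blast
        qed
        then show ?thesis using sx by simp
      qed
    qed
    then have "z = s" by simp
    then show "z \<in> fs.span (zc m ` S)" using ss by simp
  qed
  then have "card (zc m ` S) = fs.dim (cycles K2 r)"
    using fs.basis_card_eq_dim[OF zin _ tri_indep[where p=id, OF fS ztri]] by blast
  moreover have "card (zc m ` S) = card S" by (rule card_image, rule tri_inj[where p=id, OF ztri])
  ultimately show ?thesis unfolding K2_def by simp
qed

lemma construct:
  fixes K :: "'a::linorder set set"
  assumes K: "K \<in> cplx_class n r \<beta>" and r: "0 < r"
  shows "\<exists>K2::'a set set. K2 \<in> cplx_class n r \<beta> \<and> card (facets K2) = \<beta> + ((n - 1) choose r)"
proof -
  define V where "V = vertices K"
  have sc: "simplicial_complex K" using K by (rule class_sc)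
  have fV: "finite V" unfolding V_def by (rule sc_finite(1)[OF sc])
  have cV: "card V = n" unfolding V_def by (rule class_card[OF K])
  have nr: "Suc r \<le> card V" using vert_ne(2)[OF K] cV by simp
  have Vne: "V \<noteq> {}" unfolding V_def by (rule vert_ne(1)[OF K])
  have "\<beta> = fs.dim (cycles K r)" using betti_eq[OF K] class_betti[OF K] by simp
  also have "\<dots> \<le> card (avoid V r)" unfolding V_def by (rule dim_cycles_le[OF sc r])
  finally obtain S where S: "S \<subseteq> avoid V r" "card S = \<beta>" "finite S" by (rule obtain_subset_with_card_n)
  define K2 where "K2 = gen V r S"
  have sc2: "simplicial_complex K2" unfolding K2_def by (rule gen_sc[OF fV r nr S(1)])
  have v2: "vertices K2 = V" unfolding K2_def by (rule gen_vertices[OF fV r nr S(1)])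
  have f2: "facets K2 = cone V r \<union> S" unfolding K2_def by (rule gen_facets[OF fV S(1)])
  have le2: "card F \<le> Suc r" if "F \<in> K2" for F using gen_card_le[OF fV S(1)] that unfolding K2_def by blast
  have b2: "betti K2 r = \<beta>"
    using betti_eq'[OF le2] gen_betti[OF fV r nr S(1)] S(2) unfolding K2_def by simp
  have cc: "card \<rho> = Suc r" if "\<rho> \<in> facets K2" for \<rho>
    using that gen_elem(2)[OF S(1)] unfolding f2 by blast
  obtain T where T: "T \<in> cone V r" using cone_cover[OF fV r nr, of "Min V"] fV Vne by (auto intro: Min_in)
  have TK: "T \<in> K2" unfolding K2_def gen_def using T by blast
  have TC: "card T = r + 1" using T unfolding cone_def by simp
  have inC: "K2 \<in> cplx_class n r \<beta>"
    unfolding cplx_class_def pure_dim_def using sc2 v2 cV b2 cc TK TC by auto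
  have disj: "cone V r \<inter> S = {}"
  proof -
    have "Min V \<notin> \<tau>" if "\<tau> \<in> S" for \<tau> using that S(1) unfolding avoid_def by blast
    then show ?thesis unfolding cone_def by blast
  qed
  have "card (facets K2) = card (cone V r) + card S"
    unfolding f2 by (rule card_Un_disjoint[OF cone_finite[OF fV] S(3) disj])
  also have "card (cone V r) = (n - 1) choose r" using card_cone[OF fV Vne] cV by simp
  finally have "card (facets K2) = \<beta> + ((n - 1) choose r)" using S(2) by simp
  then show ?thesis using inC by blast
qed

definition reach :: "'a set set \<Rightarrow> nat \<Rightarrow> 'a set \<Rightarrow> 'a set \<Rightarrow> bool" where
  "reach K i F G \<longleftrightarrow> (\<exists>xs. xs \<noteq> [] \<and> hd xs = F \<and> last xs = G \<and> set xs \<subseteq> faces K i \<and>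
        (\<forall>j. Suc j < length xs \<longrightarrow> up_neighbors K i (xs ! j) (xs ! Suc j)))"

lemma reach_refl: "F \<in> faces K i \<Longrightarrow> reach K i F F"
  unfolding reach_def by (intro exI[of _ "[F]"]) auto

lemma reach_face: "reach K i F G \<Longrightarrow> G \<in> faces K i"
  unfolding reach_def by auto

lemma reach_step:
  assumes R: "reach K i F G" and U: "up_neighbors K i G H"
  shows "reach K i F H"
proof -
  obtain xs where xs: "xs \<noteq> []" "hd xs = F" "last xs = G" "set xs \<subseteq> faces K i"
    "\<forall>j. Suc j < length xs \<longrightarrow> up_neighbors K i (xs ! j) (xs ! Suc j)"
    using R unfolding reach_def by blast
  have H: "H \<in> faces K i" using U unfolding up_neighbors_def by blast
  have "\<forall>j. Suc j < length (xs @ [H]) \<longrightarrow> up_neighbors K i ((xs @ [H]) ! j) ((xs @ [H]) ! Suc j)"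
  proof (intro allI impI)
    fix j assume j: "Suc j < length (xs @ [H])"
    show "up_neighbors K i ((xs @ [H]) ! j) ((xs @ [H]) ! Suc j)"
    proof (cases "Suc j < length xs")
      case True
      then show ?thesis using xs(5) by (simp add: nth_append)
    next
      case False
      then have jl: "Suc j = length xs" using j by simp
      have jj: "j = length xs - 1" using jl by simp
      have a: "(xs @ [H]) ! j = G" unfolding jj using xs(1,3) by (simp add: nth_append last_conv_nth)
      have b: "(xs @ [H]) ! Suc j = H" using jl by (simp add: nth_append)
      show ?thesis unfolding a b by (rule U)
    qed
  qed
  moreover have "hd (xs @ [H]) = F" using xs(1,2) by simp
  moreover have "set (xs @ [H]) \<subseteq> faces K i" using xs(4) H by simp
  ultimately show ?thesis unfolding reach_def by (intro exI[of _ "xs @ [H]"]) simp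
qed

lemma reach_path: "(\<forall>F\<in>faces K i. \<forall>G\<in>faces K i. reach K i F G) \<Longrightarrow> path_connected_dim K i"
  unfolding path_connected_dim_def reach_def by blast

lemma fc: "0 < r \<Longrightarrow> x \<in> faces K (r - 1) \<longleftrightarrow> x \<in> K \<and> card x = r"
  unfolding faces_def by auto

lemma move_rule:
  fixes K :: "'a::linorder set set"
  assumes sc: "simplicial_complex K" and r: "0 < r"
    and Hc: "\<And>\<rho>. \<rho> \<in> cone (vertices K) r \<Longrightarrow> eb \<rho> \<in> boundary K r ` chains K r"
    and R: "reach K (r - 1) F \<sigma>" and \<rho>: "\<rho> \<in> cone (vertices K) r" and sr: "\<sigma> \<subseteq> \<rho>"
    and s': "\<sigma>' \<subseteq> \<rho>" and c': "card \<sigma>' = r"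
  shows "reach K (r - 1) F \<sigma>'"
proof -
  define V where "V = vertices K"
  define m where "m = Min V"
  have fV: "finite V" unfolding V_def by (rule sc_finite(1)[OF sc])
  obtain c where c: "c \<in> chains K r" "eb \<rho> = boundary K r c" using Hc[OF \<rho>] by blast
  define P where "P = (\<lambda>\<tau>. \<exists>\<sigma>1. reach K (r - 1) F \<sigma>1 \<and> \<sigma>1 \<subseteq> \<tau> \<and> card \<sigma>1 = r)"
  define c' where "c' = (\<lambda>\<tau>. if P \<tau> then c \<tau> else 0)"
  have c'ch: "c' \<in> chains K r" using c(1) unfolding chains_def c'_def by auto
  have zU: "boundary K r c' \<in> fs.span (eb ` cone V r)"
    using W_sub[OF sc r] c'ch unfolding V_def by blast
  have ebU: "eb \<rho> \<in> fs.span (eb ` cone V r)" using \<rho> unfolding V_def by (intro fs.span_base imageI)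
  have \<rho>V: "\<rho> \<subseteq> V" and c\<rho>: "card \<rho> = Suc r" and m\<rho>: "m \<in> \<rho>"
    using \<rho> unfolding cone_def V_def m_def by auto
  have f\<rho>: "finite \<rho>" using \<rho>V fV by (rule finite_subset)
  have zeq: "boundary K r c' x = (if reach K (r - 1) F x then eb \<rho> x else 0)" for x
  proof (cases "x \<in> faces K (r - 1)")
    case False
    then have "\<not> reach K (r - 1) F x" using reach_face by blast
    then show ?thesis using False unfolding boundary_def by simp
  next
    case True
    note xf = True
    have xK: "x \<in> K" and cx: "card x = r" using True fc[OF r] by auto
    have fx: "finite x" by (rule sc_finite(3)[OF sc xK])
    have tm: "(if insert v x \<in> K then (-1) ^ card {u\<in>x. u < v} * c' (insert v x) else 0)
        = (if reach K (r - 1) F x then (if insert v x \<in> K then (-1) ^ card {u\<in>x. u < v} * c (insert v x) else 0) else 0)"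
      if v: "v \<in> V - x" for v
    proof (cases "reach K (r - 1) F x")
      case True
      have "P (insert v x)" unfolding P_def using True cx by blast
      then show ?thesis using True unfolding c'_def by simp
    next
      case nR: False
      have "c' (insert v x) = 0"
      proof (cases "P (insert v x)")
        case False
        then show ?thesis unfolding c'_def by simp
      next
        case True
        then obtain \<sigma>1 where s1: "reach K (r - 1) F \<sigma>1" "\<sigma>1 \<subseteq> insert v x" "card \<sigma>1 = r"
          unfolding P_def by blast
        have "c (insert v x) = 0"
        proof (rule ccontr)
          assume "c (insert v x) \<noteq> 0"
          then have tf: "insert v x \<in> faces K r" using c(1) unfolding chains_def by blast
          have vx: "v \<notin> x" using v by simp
          have ct: "card (insert v x) = Suc r" using vx fx cx by simp
          have tK: "insert v x \<in> K" using tf unfolding faces_def by simp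
          have ft: "finite (insert v x)" using fx by simp
          have ne: "\<sigma>1 \<noteq> x" using s1(1) nR by blast
          have "\<not> x \<subseteq> \<sigma>1"
          proof
            assume "x \<subseteq> \<sigma>1"
            then have "x = \<sigma>1" using card_subset_eq[of \<sigma>1 x] s1(3) cx finite_subset[OF s1(2) ft] by simp
            then show False using ne by simp
          qed
          then have ps: "\<sigma>1 \<subset> \<sigma>1 \<union> x" by blast
          have fu: "finite (\<sigma>1 \<union> x)" using finite_subset[OF s1(2) ft] fx by simp
          have "card \<sigma>1 < card (\<sigma>1 \<union> x)" by (rule psubset_card_mono[OF fu ps])
          moreover have su: "\<sigma>1 \<union> x \<subseteq> insert v x" using s1(2) by blast
          moreover have "card (\<sigma>1 \<union> x) \<le> card (insert v x)" by (rule card_mono[OF ft su])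
          ultimately have "card (\<sigma>1 \<union> x) = card (insert v x)" using s1(3) ct by simp
          then have ue: "\<sigma>1 \<union> x = insert v x" using card_subset_eq[OF ft su] by simp
          have "up_neighbors K (r - 1) \<sigma>1 x"
            unfolding up_neighbors_def
          proof (intro conjI)
            show "\<sigma>1 \<in> faces K (r - 1)" by (rule reach_face[OF s1(1)])
            show "x \<in> faces K (r - 1)" by (rule xf)
            show "\<sigma>1 \<noteq> x" by (rule ne)
            show "\<sigma>1 \<union> x \<in> faces K (Suc (r - 1))" unfolding ue using tf r by simp
          qed
          then have "reach K (r - 1) F x" by (rule reach_step[OF s1(1)])
          then show False using nR by simp
        qed
        then show ?thesis unfolding c'_def by simp
      qed
      then show ?thesis using nR by simp
    qed
    have "boundary K r c' x = (\<Sum>v\<in>V - x. if insert v x \<in> K then (-1) ^ card {u\<in>x. u < v} * c' (insert v x) else 0)"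
      unfolding boundary_def V_def using xf r by simp
    also have "\<dots> = (\<Sum>v\<in>V - x. if reach K (r - 1) F x then (if insert v x \<in> K then (-1) ^ card {u\<in>x. u < v} * c (insert v x) else 0) else 0)"
      by (rule sum.cong[OF refl tm])
    also have "\<dots> = (if reach K (r - 1) F x then boundary K r c x else 0)"
      unfolding boundary_def V_def using xf r by simp
    finally show ?thesis using c(2) by simp
  qed
  have ebz: "eb \<rho> x = 0" if "m \<notin> x" "x \<noteq> \<rho> - {m}" for x
  proof (rule eb_zero)
    fix v assume v: "v \<in> \<rho>"
    show "x \<noteq> \<rho> - {v}"
    proof (cases "v = m")
      case True
      then show ?thesis using that(2) by simp
    next
      case False
      then have "m \<in> \<rho> - {v}" using m\<rho> by simp
      then show ?thesis using that(1) by auto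
    qed
  qed
  have ebnz: "eb \<rho> y \<noteq> 0" if "y \<subseteq> \<rho>" "card y = r" for y
    using eb_nz[OF f\<rho> that(1)] c\<rho> that(2) by simp
  show ?thesis
  proof (cases "reach K (r - 1) F (\<rho> - {m})")
    case True
    have d: "boundary K r c' - eb \<rho> \<in> fs.span (eb ` cone V r)" by (rule fs.span_diff[OF zU ebU])
    have "boundary K r c' - eb \<rho> = 0"
    proof (rule cone_det[OF fV d])
      fix x assume mx: "Min V \<notin> x"
      show "(boundary K r c' - eb \<rho>) x = 0"
      proof (cases "reach K (r - 1) F x")
        case True
        then show ?thesis using zeq[of x] by simp
      next
        case False
        then have "x \<noteq> \<rho> - {m}" using \<open>reach K (r - 1) F (\<rho> - {m})\<close> by auto
        then have "eb \<rho> x = 0" using ebz mx unfolding m_def by blast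
        then show ?thesis using zeq[of x] False by simp
      qed
    qed
    then have e: "boundary K r c' \<sigma>' = eb \<rho> \<sigma>'" by (simp add: fun_eq_iff)
    show ?thesis
    proof (rule ccontr)
      assume "\<not> reach K (r - 1) F \<sigma>'"
      then have "boundary K r c' \<sigma>' = 0" using zeq[of \<sigma>'] by simp
      then show False using e ebnz[OF s' c'] by simp
    qed
  next
    case False
    have "boundary K r c' = 0"
    proof (rule cone_det[OF fV zU])
      fix x assume mx: "Min V \<notin> x"
      show "boundary K r c' x = 0"
      proof (cases "reach K (r - 1) F x")
        case True
        then have "x \<noteq> \<rho> - {m}" using False by auto
        then have "eb \<rho> x = 0" using ebz mx unfolding m_def by blast
        then show ?thesis using zeq[of x] by simp
      next
        case False
        then show ?thesis using zeq[of x] by simp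
      qed
    qed
    moreover have "card \<sigma> = r" using reach_face[OF R] fc[OF r] by blast
    ultimately have "eb \<rho> \<sigma> = 0" using zeq[of \<sigma>] R by simp
    then show ?thesis using ebnz[OF sr \<open>card \<sigma> = r\<close>] by simp
  qed
qed

lemma connect:
  fixes K :: "'a::linorder set set"
  assumes sc: "simplicial_complex K" and r: "0 < r"
    and Hc: "\<And>\<rho>. \<rho> \<in> cone (vertices K) r \<Longrightarrow> eb \<rho> \<in> boundary K r ` chains K r"
  shows "\<forall>\<sigma> \<tau>. reach K (r - 1) F \<sigma> \<longrightarrow> \<tau> \<subseteq> vertices K \<longrightarrow> card \<tau> = r \<longrightarrow> card (\<tau> - \<sigma>) = k
           \<longrightarrow> reach K (r - 1) F \<tau>"
proof (induction k)
  case 0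
  show ?case
  proof (intro allI impI)
    fix \<sigma> \<tau> assume R: "reach K (r - 1) F \<sigma>" and tV: "\<tau> \<subseteq> vertices K" and ct: "card \<tau> = r"
      and ck: "card (\<tau> - \<sigma>) = 0"
    have sf: "\<sigma> \<in> K" "card \<sigma> = r" using reach_face[OF R] fc[OF r] by auto
    have fs: "finite \<sigma>" by (rule sc_finite(3)[OF sc sf(1)])
    have ft: "finite \<tau>" using tV sc_finite(1)[OF sc] by (rule finite_subset)
    have "\<tau> - \<sigma> = {}" using ck ft by simp
    then have ts: "\<tau> \<subseteq> \<sigma>" by blast
    have "\<tau> = \<sigma>" using card_subset_eq[OF fs ts] ct sf(2) by simp
    then show "reach K (r - 1) F \<tau>" using R by simp
  qed
next
  case (Suc k)
  show ?case
  proof (intro allI impI)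
    fix \<sigma> \<tau> assume R: "reach K (r - 1) F \<sigma>" and tV: "\<tau> \<subseteq> vertices K" and ct: "card \<tau> = r"
      and ck: "card (\<tau> - \<sigma>) = Suc k"
    define V where "V = vertices K"
    define m where "m = Min V"
    have fV: "finite V" unfolding V_def by (rule sc_finite(1)[OF sc])
    have sf: "\<sigma> \<in> K" "card \<sigma> = r" using reach_face[OF R] fc[OF r] by auto
    have fs: "finite \<sigma>" by (rule sc_finite(3)[OF sc sf(1)])
    have sV: "\<sigma> \<subseteq> V" unfolding V_def by (rule sc_finite(4)[OF sc sf(1)])
    have ft: "finite \<tau>" using tV sc_finite(1)[OF sc] by (rule finite_subset)
    have "\<tau> - \<sigma> \<noteq> {}" using ck by (metis card.empty nat.distinct(1))
    then obtain y where y: "y \<in> \<tau>" "y \<notin> \<sigma>" by blast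
    have "\<not> \<sigma> \<subseteq> \<tau>"
    proof
      assume st: "\<sigma> \<subseteq> \<tau>"
      then have "\<sigma> = \<tau>" using card_subset_eq[OF ft st] ct sf(2) by simp
      then show False using y by simp
    qed
    then obtain x where x: "x \<in> \<sigma>" "x \<notin> \<tau>" by blast
    have xy: "x \<noteq> y" using x y by blast
    have yV: "y \<in> V" using y(1) tV unfolding V_def by blast
    have Vne: "V \<noteq> {}" using yV by blast
    have mV: "m \<in> V" unfolding m_def using fV Vne by (rule Min_in)
    define \<sigma>' where "\<sigma>' = insert y (\<sigma> - {x})"
    have cd: "card (\<sigma> - {x}) = r - 1" using x(1) fs sf(2) by simp
    have c\<sigma>': "card \<sigma>' = r" unfolding \<sigma>'_def using cd y(2) fs r by simp
    have R': "reach K (r - 1) F \<sigma>'"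
    proof (cases "m \<in> insert y \<sigma>")
      case True
      have "card (insert y \<sigma>) = Suc r" using y(2) fs sf(2) by simp
      moreover have "insert y \<sigma> \<subseteq> V" using sV yV by blast
      ultimately have rc: "insert y \<sigma> \<in> cone (vertices K) r" unfolding cone_def V_def[symmetric] m_def[symmetric]
        using True by simp
      show ?thesis
      proof (rule move_rule[OF sc r Hc R rc])
        show "\<sigma> \<subseteq> insert y \<sigma>" by blast
        show "\<sigma>' \<subseteq> insert y \<sigma>" unfolding \<sigma>'_def by blast
        show "card \<sigma>' = r" by (rule c\<sigma>')
      qed
    next
      case False
      have ms: "m \<notin> \<sigma>" and my: "m \<noteq> y" using False by auto
      have "card (insert m \<sigma>) = Suc r" using ms fs sf(2) by simp
      moreover have "insert m \<sigma> \<subseteq> V" using sV mV by blast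
      ultimately have rc1: "insert m \<sigma> \<in> cone (vertices K) r" unfolding cone_def V_def[symmetric] m_def[symmetric]
        by simp
      define \<sigma>1 where "\<sigma>1 = insert m (\<sigma> - {x})"
      have c1: "card \<sigma>1 = r" unfolding \<sigma>1_def using cd ms fs r by simp
      have R1: "reach K (r - 1) F \<sigma>1"
      proof (rule move_rule[OF sc r Hc R rc1])
        show "\<sigma> \<subseteq> insert m \<sigma>" by blast
        show "\<sigma>1 \<subseteq> insert m \<sigma>" unfolding \<sigma>1_def by blast
        show "card \<sigma>1 = r" by (rule c1)
      qed
      have y1: "y \<notin> \<sigma>1" unfolding \<sigma>1_def using my y(2) by blast
      have f1: "finite \<sigma>1" unfolding \<sigma>1_def using fs by simp
      have "card (insert y \<sigma>1) = Suc r" using y1 f1 c1 by simp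
      moreover have "insert y \<sigma>1 \<subseteq> V" unfolding \<sigma>1_def using sV mV yV by blast
      moreover have "m \<in> insert y \<sigma>1" unfolding \<sigma>1_def by blast
      ultimately have rc2: "insert y \<sigma>1 \<in> cone (vertices K) r" unfolding cone_def V_def[symmetric] m_def[symmetric]
        by simp
      show ?thesis
      proof (rule move_rule[OF sc r Hc R1 rc2])
        show "\<sigma>1 \<subseteq> insert y \<sigma>1" by blast
        show "\<sigma>' \<subseteq> insert y \<sigma>1" unfolding \<sigma>'_def \<sigma>1_def by blast
        show "card \<sigma>' = r" by (rule c\<sigma>')
      qed
    qed
    have "\<tau> - \<sigma>' = (\<tau> - \<sigma>) - {y}" unfolding \<sigma>'_def using x(2) by blast
    then have "card (\<tau> - \<sigma>') = k" using ck y ft by simp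
    then show "reach K (r - 1) F \<tau>" using Suc.IH R' tV ct by blast
  qed
qed

lemma all_faces:
  fixes K :: "'a::linorder set set"
  assumes sc: "simplicial_complex K" and r: "0 < r"
    and Hc: "\<And>\<rho>. \<rho> \<in> cone (vertices K) r \<Longrightarrow> eb \<rho> \<in> boundary K r ` chains K r"
    and nr: "Suc r \<le> card (vertices K)"
    and S: "S \<subseteq> vertices K" and cS: "card S = r"
  shows "S \<in> faces K (r - 1)"
proof -
  define V where "V = vertices K"
  define m where "m = Min V"
  have fV: "finite V" unfolding V_def by (rule sc_finite(1)[OF sc])
  have fS: "finite S" using S fV unfolding V_def by (rule finite_subset)
  have Vne: "V \<noteq> {}" using nr unfolding V_def by auto
  have mV: "m \<in> V" unfolding m_def using fV Vne by (rule Min_in)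
  obtain \<rho> where \<rho>: "\<rho> \<in> cone V r" "S \<subseteq> \<rho>"
  proof (cases "m \<in> S")
    case True
    have "card S < card V" using cS nr unfolding V_def by simp
    then have "\<not> V \<subseteq> S" using card_mono[OF fS] by (metis not_le)
    then obtain w where w: "w \<in> V" "w \<notin> S" by blast
    have "card (insert w S) = Suc r" using w(2) fS cS by simp
    moreover have "insert w S \<subseteq> V" using S w(1) unfolding V_def by blast
    ultimately have "insert w S \<in> cone V r" unfolding cone_def m_def[symmetric] using True by simp
    then show ?thesis using that by blast
  next
    case False
    have "card (insert m S) = Suc r" using False fS cS by simp
    moreover have "insert m S \<subseteq> V" using S mV unfolding V_def by blast
    ultimately have "insert m S \<in> cone V r" unfolding cone_def m_def[symmetric] by simp
    then show ?thesis using that by blast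
  qed
  have f\<rho>: "finite \<rho>" using \<rho>(1) fV unfolding cone_def by (auto intro: finite_subset)
  have c\<rho>: "card \<rho> = Suc (card S)" using \<rho>(1) cS unfolding cone_def by simp
  have nz: "eb \<rho> S \<noteq> 0" by (rule eb_nz[OF f\<rho> \<rho>(2) c\<rho>])
  obtain c where c: "c \<in> chains K r" "eb \<rho> = boundary K r c" using Hc[of \<rho>] \<rho>(1) unfolding V_def by blast
  have "boundary K r c S \<noteq> 0" using nz c(2) by simp
  then show ?thesis unfolding boundary_def by (auto split: if_splits)
qed

lemma Hc_max:
  fixes K :: "'a::linorder set set"
  assumes K: "K \<in> cplx_class n r \<beta>" and r: "0 < r"
    and mx: "\<forall>K'::'a set set\<in>cplx_class n r \<beta>. card (facets K') \<le> card (facets K)"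
    and \<rho>: "\<rho> \<in> cone (vertices K) r"
  shows "eb \<rho> \<in> boundary K r ` chains K r"
proof -
  define W where "W = boundary K r ` chains K r"
  define C where "C = cone (vertices K) r"
  have sc: "simplicial_complex K" using K by (rule class_sc)
  have fV: "finite (vertices K)" by (rule sc_finite(1)[OF sc])
  have fC: "finite C" unfolding C_def by (rule cone_finite[OF fV])
  obtain K2 :: "'a set set" where K2: "K2 \<in> cplx_class n r \<beta>" "card (facets K2) = \<beta> + ((n - 1) choose r)"
    using construct[OF K r] by blast
  have "\<beta> + ((n - 1) choose r) \<le> card (facets K)" using mx K2 by metis
  also have "\<dots> \<le> \<beta> + fs.dim W" unfolding W_def by (rule key_ineq[OF K r])
  finally have "(n - 1) choose r \<le> fs.dim W" by simp
  moreover have "card C = (n - 1) choose r"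
    unfolding C_def using card_cone[OF fV vert_ne(1)[OF K]] class_card[OF K] by simp
  ultimately have dge: "card C \<le> fs.dim W" by simp
  interpret L: Vector_Spaces.linear "\<lambda>(a::real) (f::'a set \<Rightarrow> real) x. a * f x"
    "\<lambda>(a::real) (f::'a set \<Rightarrow> real) x. a * f x" "boundary K r" by (rule lin_bd)
  have Ws: "fs.subspace W" unfolding W_def by (rule L.subspace_image[OF chains_subspace])
  have WU: "W \<subseteq> fs.span (eb ` C)" unfolding W_def C_def by (rule W_sub[OF sc r])
  obtain B where B: "B \<subseteq> W" "fs.independent B" "W \<subseteq> fs.span B" "card B = fs.dim W"
    by (rule fs.basis_exists)
  have fEC: "finite (eb ` C)" using fC by simp
  have BU: "B \<subseteq> fs.span (eb ` C)" using B(1) WU by (rule subset_trans)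
  have fB: "finite B" using fs.independent_span_bound[OF fEC B(2) BU] by simp
  have "eb \<rho> \<in> fs.span B"
  proof (rule ccontr)
    assume nin: "eb \<rho> \<notin> fs.span B"
    have ind: "fs.independent (insert (eb \<rho>) B)" by (rule fs.independent_insertI[OF nin B(2)])
    have "eb \<rho> \<in> fs.span (eb ` C)" using \<rho> unfolding C_def by (intro fs.span_base imageI)
    then have "insert (eb \<rho>) B \<subseteq> fs.span (eb ` C)" using BU by simp
    then have "card (insert (eb \<rho>) B) \<le> card (eb ` C)" using fs.independent_span_bound[OF fEC ind] by simp
    also have "\<dots> \<le> card C" by (rule card_image_le[OF fC])
    also have "\<dots> \<le> card B" using dge B(4) by simp
    finally have "card (insert (eb \<rho>) B) \<le> card B" .
    moreover have "eb \<rho> \<notin> B" using nin fs.span_superset by blast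
    ultimately show False using fB by simp
  qed
  moreover have "fs.span B \<subseteq> W" using B(1) Ws by (rule fs.span_minimal)
  ultimately show ?thesis unfolding W_def by blast
qed

theorem mainTheorem3:
  fixes K :: "'a::linorder set set" and n r \<beta> :: nat
  assumes "1 \<le> r"
    and "K \<in> cplx_class n r \<beta>"
    and "\<forall>K'::'a set set\<in>cplx_class n r \<beta>. card (facets K') \<le> card (facets K)"
  shows "(\<forall>S. S \<subseteq> vertices K \<and> card S = r \<longrightarrow> S \<in> faces K (r - 1))
         \<and> path_connected_dim K (r - 1)"
proof -
  have r: "0 < r" using assms(1) by simp
  have K: "K \<in> cplx_class n r \<beta>" by (rule assms(2))
  have sc: "simplicial_complex K" using K by (rule class_sc)
  have Hc: "\<And>\<rho>. \<rho> \<in> cone (vertices K) r \<Longrightarrow> eb \<rho> \<in> boundary K r ` chains K r"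
    using Hc_max[OF K r assms(3)] by blast
  have nr: "Suc r \<le> card (vertices K)" using vert_ne(2)[OF K] class_card[OF K] by simp
  have A: "\<forall>S. S \<subseteq> vertices K \<and> card S = r \<longrightarrow> S \<in> faces K (r - 1)"
    using all_faces[OF sc r Hc nr] by blast
  have "\<forall>F\<in>faces K (r - 1). \<forall>G\<in>faces K (r - 1). reach K (r - 1) F G"
  proof (intro ballI)
    fix F G assume F: "F \<in> faces K (r - 1)" and G: "G \<in> faces K (r - 1)"
    have GK: "G \<in> K" and cG: "card G = r" using G fc[OF r] by auto
    have GV: "G \<subseteq> vertices K" by (rule sc_finite(4)[OF sc GK])
    show "reach K (r - 1) F G"
      using connect[OF sc r Hc, of F "card (G - F)"] reach_refl[OF F] GV cG by blast
  qed
  then have "path_connected_dim K (r - 1)" by (rule reach_path)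
  then show ?thesis using A by simp
qed

end
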